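(* Let $\mathcal{K}\subseteq\mathbb{R}\cup\{\pm\infty\}$ have nonzero Lebesgue measure, let $\varpi:\mathcal{K}\to\mathbb{R}_{\geq 0}$ be Lebesgue integrable with only countably many zeros, let $d,n,\rho\in\mathbb{N}$, let $\mathbf{f}\in\mathbb{L}^2_{\varpi}(\mathcal{K};\mathbb{R}^d)$ satisfy $\mathsf{F}^{-1}:=\int_{\mathcal{K}}\varpi(\tau)\mathbf{f}(\tau)\mathbf{f}^\top(\tau)\,d\tau\succ 0$, put $F(\tau)=\mathbf{f}(\tau)\otimes I_n$, and let $U\in\mathbb{R}^{n\times n}$ be symmetric with $U\succ 0$. Let $\mathbf{x}\in\mathbb{L}^2_{\varpi}(\mathcal{K};\mathbb{R}^n)$, $\boldsymbol{\vartheta}=\int_{\mathcal{K}}\varpi F\mathbf{x}\,d\tau$, and let $\Upsilon\in\mathbb{R}^{dn\times\rho n}$, $\mathbf{z}\in\mathbb{R}^{\rho n}$ satisfy $\Upsilon\mathbf{z}=\boldsymbol{\vartheta}$. For symmetric $Y\in\mathbb{R}^{\rho dn\times\rho dn}$ and $X=[X_1\ \cdots\ X_d]\in\mathbb{R}^{n\times\rho dn}$ ($X_i\in\mathbb{R}^{n\times\rho n}$) put $\widehat{X}=\mathrm{Col}_{i=1}^dX_i$ and $W=\int_{\mathcal{K}}\varpi(\tau)(\mathbf{f}^\top(\tau)\otimes I_{\rho n})Y(\mathbf{f}(\tau)\otimes I_{\rho n})\,d\tau$. Then for all such $X,Y$ satisfying $\begin{bmatrix}U&-X\\-X^\top&Y\end{bmatrix}\succeq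 0$, $$\mathbf{z}^\top\big[\Upsilon^\top\widehat{X}+\widehat{X}^\top\Upsilon-W\big]\mathbf{z}\;\leq\;\boldsymbol{\vartheta}^\top(\mathsf{F}\otimes U)\boldsymbol{\vartheta},$$ and equality holds for $\widehat{X}=(\mathsf{F}\otimes U)\Upsilon$ and $Y=X^\top U^{-1}X$ (which satisfy the matrix inequality). Thus the largest lower bound of the form $\mathbf{z}^\top[\Upsilon^\top\widehat{X}+\widehat{X}^\top\Upsilon-W]\mathbf{z}$ for $\int_{\mathcal{K}}\varpi\,\mathbf{x}^\top U\mathbf{x}\,d\tau$ equals the lower bound $\boldsymbol{\vartheta}^\top(\mathsf{F}\otimes U)\boldsymbol{\vartheta}$.
   Context: $\mathbb{L}^2_{\varpi}(\mathcal{K};\mathbb{R}^m)$ is the set of Lebesgue integrable functions $\phi:\mathcal{K}\to\mathbb{R}^m$ with $\int_{\mathcal{K}}\varpi\phi^\top\phi\,d\tau<\infty$. $\mathrm{Col}$ stacks blocks vertically; $\otimes$ is the Kronecker product. *)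

theory Defs
  imports "HOL-Analysis.Analysis" "Jordan_Normal_Form.Gauss_Jordan_Elimination"
begin

definition kron :: "real mat \<Rightarrow> real mat \<Rightarrow> real mat" where
  "kron A B = mat (dim_row A * dim_row B) (dim_col A * dim_col B)
     (\<lambda>(i, j). A $$ (i div dim_row B, j div dim_col B) * B $$ (i mod dim_row B, j mod dim_col B))"

definition col_mat :: "real Matrix.vec \<Rightarrow> real mat" where
  "col_mat v = mat_of_cols (dim_vec v) [v]"

definition mat_inv :: "real mat \<Rightarrow> real mat" where
  "mat_inv A = the (mat_inverse A)"

definition sym_mat :: "real mat \<Rightarrow> bool" where
  "sym_mat A \<longleftrightarrow> transpose_mat A = A"

definition psd_mat :: "nat \<Rightarrow> real mat \<Rightarrow> bool" where
  "psd_mat k A \<longleftrightarrow> A \<in> carrier_mat k k \<and> sym_mat A \<and>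
     (\<forall>v \<in> carrier_vec k. scalar_prod v (A *\<^sub>v v) \<ge> 0)"

definition pd_mat :: "nat \<Rightarrow> real mat \<Rightarrow> bool" where
  "pd_mat k A \<longleftrightarrow> A \<in> carrier_mat k k \<and> sym_mat A \<and>
     (\<forall>v \<in> carrier_vec k. v \<noteq> 0\<^sub>v k \<longrightarrow> scalar_prod v (A *\<^sub>v v) > 0)"

definition weighted_L2 :: "real set \<Rightarrow> (real \<Rightarrow> real) \<Rightarrow> nat \<Rightarrow> (real \<Rightarrow> real Matrix.vec) \<Rightarrow> bool" where
  "weighted_L2 K w m \<phi> \<longleftrightarrow> (\<forall>\<tau>. \<phi> \<tau> \<in> carrier_vec m) \<and>
     (\<forall>i<m. set_borel_measurable lebesgue K (\<lambda>\<tau>. \<phi> \<tau> $ i)) \<and>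
     set_integrable lebesgue K (\<lambda>\<tau>. w \<tau> * scalar_prod (\<phi> \<tau>) (\<phi> \<tau>))"

definition mat_integral :: "real set \<Rightarrow> (real \<Rightarrow> real) \<Rightarrow> nat \<Rightarrow> nat \<Rightarrow> (real \<Rightarrow> real mat) \<Rightarrow> real mat" where
  "mat_integral K w r c M = mat r c (\<lambda>(i, j). LINT \<tau>:K|lebesgue. w \<tau> * M \<tau> $$ (i, j))"

definition vec_integral :: "real set \<Rightarrow> (real \<Rightarrow> real) \<Rightarrow> nat \<Rightarrow> (real \<Rightarrow> real Matrix.vec) \<Rightarrow> real Matrix.vec" where
  "vec_integral K w r v = Matrix.vec r (\<lambda>i. LINT \<tau>:K|lebesgue. w \<tau> * v \<tau> $ i)"

(* X = [X_1 ... X_d] (n x (d*m), X_i of size n x m)  \<mapsto>  Col_{i=1}^d X_i  ((d*n) x m) *)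
definition col_stack :: "nat \<Rightarrow> nat \<Rightarrow> nat \<Rightarrow> real mat \<Rightarrow> real mat" where
  "col_stack d n m X = mat (d * n) m (\<lambda>(r, c). X $$ (r mod n, (r div n) * m + c))"

end

theory Submission
  imports Defs "Jordan_Normal_Form.Determinant"
begin


lemma set_integrable_sum':
  fixes f :: "'i \<Rightarrow> 'a \<Rightarrow> real"
  assumes "\<And>i. i \<in> I \<Longrightarrow> set_integrable M A (f i)"
  shows "set_integrable M A (\<lambda>x. \<Sum>i\<in>I. f i x)"
  using assms unfolding set_integrable_def by (simp add: sum_distrib_left)

lemma set_integral_sum':
  fixes f :: "'i \<Rightarrow> 'a \<Rightarrow> real"
  assumes "\<And>i. i \<in> I \<Longrightarrow> set_integrable M A (f i)"
  shows "(LINT x:A|M. (\<Sum>i\<in>I. f i x)) = (\<Sum>i\<in>I. LINT x:A|M. f i x)"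
  using assms unfolding set_integrable_def set_lebesgue_integral_def
  by (simp add: sum_distrib_left integral_sum)

lemma set_integral_nonneg':
  fixes f :: "'a \<Rightarrow> real"
  shows "(\<And>x. x \<in> A \<Longrightarrow> 0 \<le> f x) \<Longrightarrow> 0 \<le> (LINT x:A|M. f x)"
  unfolding set_lebesgue_integral_def by (intro Bochner_Integration.integral_nonneg) (auto simp: indicator_def)

lemma si_prod:
  fixes w a b A B :: "real \<Rightarrow> real"
  assumes "set_borel_measurable lebesgue K w" "set_borel_measurable lebesgue K a"
    "set_borel_measurable lebesgue K b"
    "set_integrable lebesgue K (\<lambda>t. w t * A t)" "set_integrable lebesgue K (\<lambda>t. w t * B t)"
    "\<forall>t\<in>K. 0 \<le> w t" "\<forall>t\<in>K. (a t)\<^sup>2 \<le> A t" "\<forall>t\<in>K. (b t)\<^sup>2 \<le> B t"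
  shows "set_integrable lebesgue K (\<lambda>t. w t * (a t * b t))"
proof (rule set_integrable_bound[where f = "\<lambda>t. w t * A t + w t * B t"])
  show "set_integrable lebesgue K (\<lambda>t. w t * A t + w t * B t)" using assms(4,5) by auto
  have eq: "(\<lambda>t. indicator K t *\<^sub>R (w t * (a t * b t))) = (\<lambda>t. (indicator K t *\<^sub>R w t) * ((indicator K t *\<^sub>R a t) * (indicator K t *\<^sub>R b t)))"
    by (auto simp: indicator_def fun_eq_iff)
  show "set_borel_measurable lebesgue K (\<lambda>t. w t * (a t * b t))"
    using assms(1-3) unfolding set_borel_measurable_def eq by simp
  show "AE t in lebesgue. t \<in> K \<longrightarrow> norm (w t * (a t * b t)) \<le> norm (w t * A t + w t * B t)"
  proof (rule AE_I2, rule impI)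
    fix t assume t: "t \<in> K"
    have w0: "0 \<le> w t" and a: "(a t)\<^sup>2 \<le> A t" and b: "(b t)\<^sup>2 \<le> B t" using assms(6-8) t by auto
    have ab: "\<bar>a t * b t\<bar> \<le> A t + B t"
    proof -
      have "0 \<le> (\<bar>a t\<bar> - \<bar>b t\<bar>)\<^sup>2" by simp
      then have "2 * \<bar>a t * b t\<bar> \<le> (a t)\<^sup>2 + (b t)\<^sup>2"
        by (simp add: power2_diff abs_mult)
      moreover have "0 \<le> (a t)\<^sup>2" "0 \<le> (b t)\<^sup>2" by auto
      ultimately show ?thesis using a b by linarith
    qed
    have AB: "0 \<le> A t + B t" using a b zero_le_power2[of "a t"] zero_le_power2[of "b t"] by linarith
    have "norm (w t * (a t * b t)) = w t * \<bar>a t * b t\<bar>" using w0 by (simp add: abs_mult)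
    also have "\<dots> \<le> w t * (A t + B t)" using ab w0 by (rule mult_left_mono)
    also have "\<dots> = norm (w t * A t + w t * B t)"
      using w0 AB by (simp add: distrib_left[symmetric] abs_mult)
    finally show "norm (w t * (a t * b t)) \<le> norm (w t * A t + w t * B t)" .
  qed
qed

lemma sq_le_sp:
  fixes v :: "real Matrix.vec"
  assumes "v \<in> carrier_vec k" "i < k"
  shows "(v $ i)\<^sup>2 \<le> v \<bullet> v"
proof -
  have "(v $ i)\<^sup>2 = v $ i * v $ i" by (simp add: power2_eq_square)
  also have "\<dots> \<le> (\<Sum>j\<in>{0..<k}. v $ j * v $ j)"
    using assms(2) by (intro member_le_sum[where f = "\<lambda>j. v $ j * v $ j"]) auto
  finally show ?thesis using assms(1) by (simp add: scalar_prod_def)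
qed


lemma sint2:
  fixes g :: "'i \<Rightarrow> 'j \<Rightarrow> 'a \<Rightarrow> real"
  assumes "\<And>i j. i \<in> I \<Longrightarrow> j \<in> J \<Longrightarrow> set_integrable M A (g i j)"
  shows "(LINT t:A|M. (\<Sum>i\<in>I. \<Sum>j\<in>J. g i j t)) = (\<Sum>i\<in>I. \<Sum>j\<in>J. LINT t:A|M. g i j t)"
  using assms by (simp add: set_integral_sum' set_integrable_sum')

lemma sint3:
  fixes g :: "'i \<Rightarrow> 'j \<Rightarrow> 'k \<Rightarrow> 'a \<Rightarrow> real"
  assumes "\<And>i j k. i \<in> I \<Longrightarrow> j \<in> J \<Longrightarrow> k \<in> L \<Longrightarrow> set_integrable M A (g i j k)"
  shows "(LINT t:A|M. (\<Sum>i\<in>I. \<Sum>j\<in>J. \<Sum>k\<in>L. g i j k t)) = (\<Sum>i\<in>I. \<Sum>j\<in>J. \<Sum>k\<in>L. LINT t:A|M. g i j k t)"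
  using assms by (simp add: set_integral_sum' set_integrable_sum')

lemma sint4:
  fixes g :: "'i \<Rightarrow> 'j \<Rightarrow> 'k \<Rightarrow> 'l \<Rightarrow> 'a \<Rightarrow> real"
  assumes "\<And>i j k l. i \<in> I \<Longrightarrow> j \<in> J \<Longrightarrow> k \<in> L \<Longrightarrow> l \<in> N \<Longrightarrow> set_integrable M A (g i j k l)"
  shows "(LINT t:A|M. (\<Sum>i\<in>I. \<Sum>j\<in>J. \<Sum>k\<in>L. \<Sum>l\<in>N. g i j k l t)) = (\<Sum>i\<in>I. \<Sum>j\<in>J. \<Sum>k\<in>L. \<Sum>l\<in>N. LINT t:A|M. g i j k l t)"
  using assms by (simp add: set_integral_sum' set_integrable_sum')

lemma sintegrable4:
  fixes g :: "'i \<Rightarrow> 'j \<Rightarrow> 'k \<Rightarrow> 'l \<Rightarrow> 'a \<Rightarrow> real"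
  assumes "\<And>i j k l. i \<in> I \<Longrightarrow> j \<in> J \<Longrightarrow> k \<in> L \<Longrightarrow> l \<in> N \<Longrightarrow> set_integrable M A (g i j k l)"
  shows "set_integrable M A (\<lambda>t. \<Sum>i\<in>I. \<Sum>j\<in>J. \<Sum>k\<in>L. \<Sum>l\<in>N. g i j k l t)"
  using assms by (simp add: set_integrable_sum')

lemma sintegrable3:
  fixes g :: "'i \<Rightarrow> 'j \<Rightarrow> 'k \<Rightarrow> 'a \<Rightarrow> real"
  assumes "\<And>i j k. i \<in> I \<Longrightarrow> j \<in> J \<Longrightarrow> k \<in> L \<Longrightarrow> set_integrable M A (g i j k)"
  shows "set_integrable M A (\<lambda>t. \<Sum>i\<in>I. \<Sum>j\<in>J. \<Sum>k\<in>L. g i j k t)"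
  using assms by (simp add: set_integrable_sum')

lemma sintegrable2:
  fixes g :: "'i \<Rightarrow> 'j \<Rightarrow> 'a \<Rightarrow> real"
  assumes "\<And>i j. i \<in> I \<Longrightarrow> j \<in> J \<Longrightarrow> set_integrable M A (g i j)"
  shows "set_integrable M A (\<lambda>t. \<Sum>i\<in>I. \<Sum>j\<in>J. g i j t)"
  using assms by (simp add: set_integrable_sum')



lemma GS:
  fixes G Fs :: "nat \<Rightarrow> nat \<Rightarrow> real" and \<theta> :: "nat \<Rightarrow> real"
  assumes GF: "\<And>i r. i < d \<Longrightarrow> r < d \<Longrightarrow> (\<Sum>l<d. G i l * Fs l r) = (if i = r then 1 else 0)"
    and i: "i < d"
  shows "(\<Sum>l<d. G i l * (\<Sum>r<d. Fs l r * \<theta> r)) = \<theta> i"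
proof -
  have "(\<Sum>l<d. G i l * (\<Sum>r<d. Fs l r * \<theta> r)) = (\<Sum>l<d. \<Sum>r<d. G i l * Fs l r * \<theta> r)"
    by (simp add: sum_distrib_left mult.assoc)
  also have "\<dots> = (\<Sum>r<d. \<Sum>l<d. G i l * Fs l r * \<theta> r)" by (rule sum.swap)
  also have "\<dots> = (\<Sum>r<d. (\<Sum>l<d. G i l * Fs l r) * \<theta> r)" by (simp add: sum_distrib_right)
  also have "\<dots> = (\<Sum>r<d. (if i = r then \<theta> r else 0))" by (intro sum.cong refl) (simp add: GF i)
  also have "\<dots> = \<theta> i" using i by (simp add: sum.delta)
  finally show ?thesis .
qed


lemma swap_mid:
  "(\<Sum>i\<in>A. \<Sum>j\<in>B. \<Sum>k\<in>C. g i j k) = (\<Sum>i\<in>A. \<Sum>k\<in>C. \<Sum>j\<in>B. g i j k)"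
  by (intro sum.cong refl sum.swap)

lemma Q_eq_T:
  fixes Fs U :: "nat \<Rightarrow> nat \<Rightarrow> real" and th :: "nat \<Rightarrow> real"
  assumes Fsym: "\<And>i l. i < d \<Longrightarrow> l < d \<Longrightarrow> Fs i l = Fs l i"
  shows "(\<Sum>i<d. \<Sum>j<n. \<Sum>k<n. U j k * (\<Sum>r<d. Fs i r * th (r*n+j)) * th (i*n+k))
       = (\<Sum>a<d. \<Sum>j<n. \<Sum>b<d. \<Sum>k<n. th (a*n+j) * Fs a b * U j k * th (b*n+k))"
proof -
  have "(\<Sum>i<d. \<Sum>j<n. \<Sum>k<n. U j k * (\<Sum>r<d. Fs i r * th (r*n+j)) * th (i*n+k))
      = (\<Sum>i<d. \<Sum>j<n. \<Sum>k<n. \<Sum>r<d. th (r*n+j) * Fs r i * U j k * th (i*n+k))"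
    by (intro sum.cong refl) (simp add: sum_distrib_left sum_distrib_right Fsym mult_ac)
  also have "\<dots> = (\<Sum>i<d. \<Sum>j<n. \<Sum>r<d. \<Sum>k<n. th (r*n+j) * Fs r i * U j k * th (i*n+k))"
    by (intro sum.cong refl sum.swap)
  also have "\<dots> = (\<Sum>i<d. \<Sum>r<d. \<Sum>j<n. \<Sum>k<n. th (r*n+j) * Fs r i * U j k * th (i*n+k))"
    by (intro sum.cong refl sum.swap)
  also have "\<dots> = (\<Sum>r<d. \<Sum>i<d. \<Sum>j<n. \<Sum>k<n. th (r*n+j) * Fs r i * U j k * th (i*n+k))"
    by (rule sum.swap)
  also have "\<dots> = (\<Sum>r<d. \<Sum>j<n. \<Sum>i<d. \<Sum>k<n. th (r*n+j) * Fs r i * U j k * th (i*n+k))"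
    by (intro sum.cong refl sum.swap)
  finally show ?thesis .
qed

lemma core1:
  fixes G Fs U M S V :: "nat \<Rightarrow> nat \<Rightarrow> real" and th :: "nat \<Rightarrow> real"
  assumes GF: "\<And>i r. i < d \<Longrightarrow> r < d \<Longrightarrow> (\<Sum>l<d. G i l * Fs l r) = (if i = r then 1 else 0)"
    and Fsym: "\<And>i l. i < d \<Longrightarrow> l < d \<Longrightarrow> Fs i l = Fs l i"
    and S_def: "\<And>i j. S i j = (\<Sum>r<d. Fs i r * th (r*n+j))"
    and hyp: "0 \<le> (\<Sum>i<d. \<Sum>l<d. G i l * (M i l - 2 * (\<Sum>j<n. S l j * V i j) + (\<Sum>j<n. \<Sum>k<n. U j k * S i j * S l k)))"
  shows "2 * (\<Sum>i<d. \<Sum>j<n. th (i*n+j) * V i j) - (\<Sum>i<d. \<Sum>l<d. G i l * M i l)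
      \<le> (\<Sum>a<d. \<Sum>j<n. \<Sum>b<d. \<Sum>k<n. th (a*n+j) * Fs a b * U j k * th (b*n+k))"
proof -
  have GSl: "(\<Sum>l<d. G i l * S l j) = th (i*n+j)" if "i < d" for i j
    unfolding S_def using GS[OF GF that, of "\<lambda>r. th (r*n+j)"] by simp
  have h1: "(\<Sum>i<d. \<Sum>l<d. G i l * (M i l - 2 * (\<Sum>j<n. S l j * V i j) + (\<Sum>j<n. \<Sum>k<n. U j k * S i j * S l k)))
     = (\<Sum>i<d. \<Sum>l<d. G i l * M i l) - 2 * (\<Sum>i<d. \<Sum>l<d. G i l * (\<Sum>j<n. S l j * V i j))
       + (\<Sum>i<d. \<Sum>l<d. G i l * (\<Sum>j<n. \<Sum>k<n. U j k * S i j * S l k))"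
    by (simp add: ring_distribs sum_subtractf sum.distrib sum_distrib_left mult_ac)
  have h2: "(\<Sum>i<d. \<Sum>l<d. G i l * (\<Sum>j<n. S l j * V i j)) = (\<Sum>i<d. \<Sum>j<n. th (i*n+j) * V i j)"
  proof (rule sum.cong[OF refl])
    fix i assume i: "i \<in> {..<d}"
    have "(\<Sum>l<d. G i l * (\<Sum>j<n. S l j * V i j)) = (\<Sum>l<d. \<Sum>j<n. G i l * S l j * V i j)"
      by (simp add: sum_distrib_left mult.assoc)
    also have "\<dots> = (\<Sum>j<n. \<Sum>l<d. G i l * S l j * V i j)" by (rule sum.swap)
    also have "\<dots> = (\<Sum>j<n. (\<Sum>l<d. G i l * S l j) * V i j)" by (simp add: sum_distrib_right)
    also have "\<dots> = (\<Sum>j<n. th (i*n+j) * V i j)" using i GSl by simp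
    finally show "(\<Sum>l<d. G i l * (\<Sum>j<n. S l j * V i j)) = (\<Sum>j<n. th (i*n+j) * V i j)" .
  qed
  have h3: "(\<Sum>i<d. \<Sum>l<d. G i l * (\<Sum>j<n. \<Sum>k<n. U j k * S i j * S l k))
       = (\<Sum>i<d. \<Sum>j<n. \<Sum>k<n. U j k * S i j * th (i*n+k))"
  proof (rule sum.cong[OF refl])
    fix i assume i: "i \<in> {..<d}"
    have "(\<Sum>l<d. G i l * (\<Sum>j<n. \<Sum>k<n. U j k * S i j * S l k)) = (\<Sum>l<d. \<Sum>j<n. \<Sum>k<n. U j k * S i j * (G i l * S l k))"
      by (simp add: sum_distrib_left mult_ac)
    also have "\<dots> = (\<Sum>j<n. \<Sum>k<n. \<Sum>l<d. U j k * S i j * (G i l * S l k))"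
      by (subst sum.swap) (intro sum.cong refl sum.swap)
    also have "\<dots> = (\<Sum>j<n. \<Sum>k<n. U j k * S i j * (\<Sum>l<d. G i l * S l k))"
      by (simp add: sum_distrib_left)
    also have "\<dots> = (\<Sum>j<n. \<Sum>k<n. U j k * S i j * th (i*n+k))" using i GSl by simp
    finally show "(\<Sum>l<d. G i l * (\<Sum>j<n. \<Sum>k<n. U j k * S i j * S l k)) = (\<Sum>j<n. \<Sum>k<n. U j k * S i j * th (i*n+k))" .
  qed
  have h4: "(\<Sum>i<d. \<Sum>j<n. \<Sum>k<n. U j k * S i j * th (i*n+k))
      = (\<Sum>a<d. \<Sum>j<n. \<Sum>b<d. \<Sum>k<n. th (a*n+j) * Fs a b * U j k * th (b*n+k))"
    unfolding S_def by (rule Q_eq_T[OF Fsym])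
  show ?thesis using hyp unfolding h1 h2 h3 h4 by linarith
qed


lemma rot3:
  "(\<Sum>j\<in>A. \<Sum>k\<in>B. \<Sum>i\<in>C. g i j k) = (\<Sum>i\<in>C. \<Sum>j\<in>A. \<Sum>k\<in>B. g i j k)"
proof -
  have "(\<Sum>j\<in>A. \<Sum>k\<in>B. \<Sum>i\<in>C. g i j k) = (\<Sum>j\<in>A. \<Sum>i\<in>C. \<Sum>k\<in>B. g i j k)"
    by (intro sum.cong refl sum.swap)
  also have "\<dots> = (\<Sum>i\<in>C. \<Sum>j\<in>A. \<Sum>k\<in>B. g i j k)" by (rule sum.swap)
  finally show ?thesis .
qed

lemma core4:
  fixes G Fs U S :: "nat \<Rightarrow> nat \<Rightarrow> real" and th :: "nat \<Rightarrow> real" and I :: real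
  assumes GF: "\<And>i r. i < d \<Longrightarrow> r < d \<Longrightarrow> (\<Sum>l<d. G i l * Fs l r) = (if i = r then 1 else 0)"
    and Fsym: "\<And>i l. i < d \<Longrightarrow> l < d \<Longrightarrow> Fs i l = Fs l i"
    and S_def: "\<And>i j. S i j = (\<Sum>r<d. Fs i r * th (r*n+j))"
    and hyp: "0 \<le> I - (\<Sum>j<n. \<Sum>k<n. \<Sum>l<d. U j k * S l k * th (l*n+j))
      - (\<Sum>j<n. \<Sum>k<n. \<Sum>i<d. U j k * S i j * th (i*n+k))
      + (\<Sum>j<n. \<Sum>k<n. \<Sum>i<d. \<Sum>l<d. U j k * S i j * S l k * G i l)"
  shows "(\<Sum>a<d. \<Sum>j<n. \<Sum>b<d. \<Sum>k<n. th (a*n+j) * Fs a b * U j k * th (b*n+k)) \<le> I"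
proof -
  have GSl: "(\<Sum>l<d. G i l * S l j) = th (i*n+j)" if "i < d" for i j
    unfolding S_def using GS[OF GF that, of "\<lambda>r. th (r*n+j)"] by simp
  have QT: "(\<Sum>i<d. \<Sum>j<n. \<Sum>k<n. U j k * S i j * th (i*n+k))
      = (\<Sum>a<d. \<Sum>j<n. \<Sum>b<d. \<Sum>k<n. th (a*n+j) * Fs a b * U j k * th (b*n+k))"
    unfolding S_def by (rule Q_eq_T[OF Fsym])
  have T3: "(\<Sum>j<n. \<Sum>k<n. \<Sum>i<d. U j k * S i j * th (i*n+k)) = (\<Sum>i<d. \<Sum>j<n. \<Sum>k<n. U j k * S i j * th (i*n+k))"
    by (rule rot3)
  have T4: "(\<Sum>j<n. \<Sum>k<n. \<Sum>i<d. \<Sum>l<d. U j k * S i j * S l k * G i l) = (\<Sum>j<n. \<Sum>k<n. \<Sum>i<d. U j k * S i j * th (i*n+k))"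
  proof (intro sum.cong refl)
    fix j k i assume i: "i \<in> {..<d}"
    have "(\<Sum>l<d. U j k * S i j * S l k * G i l) = U j k * S i j * (\<Sum>l<d. G i l * S l k)"
      by (simp add: sum_distrib_left mult_ac)
    then show "(\<Sum>l<d. U j k * S i j * S l k * G i l) = U j k * S i j * th (i*n+k)" using GSl i by simp
  qed
  have T2: "(\<Sum>j<n. \<Sum>k<n. \<Sum>l<d. U j k * S l k * th (l*n+j))
      = (\<Sum>a<d. \<Sum>j<n. \<Sum>b<d. \<Sum>k<n. th (a*n+j) * Fs a b * U j k * th (b*n+k))"
  proof -
    have "(\<Sum>j<n. \<Sum>k<n. \<Sum>l<d. U j k * S l k * th (l*n+j))
        = (\<Sum>j<n. \<Sum>k<n. \<Sum>l<d. \<Sum>r<d. th (l*n+j) * Fs l r * U j k * th (r*n+k))"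
      unfolding S_def by (intro sum.cong refl) (simp add: sum_distrib_left sum_distrib_right mult_ac)
    also have "\<dots> = (\<Sum>l<d. \<Sum>j<n. \<Sum>k<n. \<Sum>r<d. th (l*n+j) * Fs l r * U j k * th (r*n+k))"
      by (rule rot3)
    also have "\<dots> = (\<Sum>l<d. \<Sum>j<n. \<Sum>r<d. \<Sum>k<n. th (l*n+j) * Fs l r * U j k * th (r*n+k))"
      by (intro sum.cong refl sum.swap)
    finally show ?thesis .
  qed
  show ?thesis using hyp unfolding T2 T3 T4 QT by linarith
qed

lemma core2:
  fixes G Fs U Ui M V :: "nat \<Rightarrow> nat \<Rightarrow> real" and th :: "nat \<Rightarrow> real"
  assumes GF: "\<And>i r. i < d \<Longrightarrow> r < d \<Longrightarrow> (\<Sum>l<d. G i l * Fs l r) = (if i = r then 1 else 0)"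
    and Gsym: "\<And>i l. i < d \<Longrightarrow> l < d \<Longrightarrow> G i l = G l i"
    and Usym: "\<And>i l. i < n \<Longrightarrow> l < n \<Longrightarrow> U i l = U l i"
    and UUi: "\<And>k b. k < n \<Longrightarrow> b < n \<Longrightarrow> (\<Sum>a<n. U k a * Ui a b) = (if k = b then 1 else 0)"
    and v_def: "\<And>i j. i < d \<Longrightarrow> j < n \<Longrightarrow> V i j = (\<Sum>r<d. \<Sum>k<n. Fs i r * U j k * th (r*n+k))"
    and M_def: "\<And>i l. M i l = (\<Sum>a<n. \<Sum>b<n. V i a * Ui a b * V l b)"
  shows "2 * (\<Sum>i<d. \<Sum>j<n. th (i*n+j) * V i j) - (\<Sum>i<d. \<Sum>l<d. G i l * M i l)
      = (\<Sum>a<d. \<Sum>j<n. \<Sum>b<d. \<Sum>k<n. th (a*n+j) * Fs a b * U j k * th (b*n+k))"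
proof -
  define W where "W r a = (\<Sum>k<n. U a k * th (r*n+k))" for r a
  have v': "V i a = (\<Sum>r<d. Fs i r * W r a)" if "i < d" "a < n" for i a
    using v_def[OF that] unfolding W_def by (simp add: sum_distrib_left mult_ac)
  have GW: "(\<Sum>i<d. G i l * V i a) = W l a" if "l < d" "a < n" for l a
  proof -
    have "(\<Sum>i<d. G i l * V i a) = (\<Sum>i<d. G l i * (\<Sum>r<d. Fs i r * W r a))"
      using that by (intro sum.cong refl) (simp add: v' Gsym)
    also have "\<dots> = W l a" by (rule GS[OF GF that(1)])
    finally show ?thesis .
  qed
  have WU: "(\<Sum>a<n. W l a * Ui a b) = th (l*n+b)" if "b < n" for l b
  proof -
    have "(\<Sum>a<n. W l a * Ui a b) = (\<Sum>a<n. \<Sum>k<n. th (l*n+k) * (U k a * Ui a b))"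
      unfolding W_def by (intro sum.cong refl) (simp add: sum_distrib_left sum_distrib_right Usym mult_ac)
    also have "\<dots> = (\<Sum>k<n. th (l*n+k) * (\<Sum>a<n. U k a * Ui a b))"
      by (subst sum.swap) (simp add: sum_distrib_left)
    also have "\<dots> = (\<Sum>k<n. if k = b then th (l*n+k) else 0)"
      by (intro sum.cong refl) (simp add: UUi that)
    also have "\<dots> = th (l*n+b)" using that by (simp add: sum.delta)
    finally show ?thesis .
  qed
  have tv: "(\<Sum>i<d. \<Sum>j<n. th (i*n+j) * V i j)
      = (\<Sum>a<d. \<Sum>j<n. \<Sum>b<d. \<Sum>k<n. th (a*n+j) * Fs a b * U j k * th (b*n+k))"
    by (intro sum.cong refl) (simp add: v_def sum_distrib_left mult_ac)
  have GM: "(\<Sum>i<d. \<Sum>l<d. G i l * M i l) = (\<Sum>i<d. \<Sum>j<n. th (i*n+j) * V i j)"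
  proof -
    have "(\<Sum>i<d. \<Sum>l<d. G i l * M i l) = (\<Sum>i<d. \<Sum>l<d. \<Sum>a<n. \<Sum>b<n. G i l * V i a * Ui a b * V l b)"
      unfolding M_def by (simp add: sum_distrib_left mult_ac)
    also have "\<dots> = (\<Sum>l<d. \<Sum>i<d. \<Sum>a<n. \<Sum>b<n. G i l * V i a * Ui a b * V l b)"
      by (rule sum.swap)
    also have "\<dots> = (\<Sum>l<d. \<Sum>a<n. \<Sum>b<n. \<Sum>i<d. G i l * V i a * Ui a b * V l b)"
    proof (rule sum.cong[OF refl])
      fix l
      have "(\<Sum>i<d. \<Sum>a<n. \<Sum>b<n. G i l * V i a * Ui a b * V l b)
          = (\<Sum>a<n. \<Sum>i<d. \<Sum>b<n. G i l * V i a * Ui a b * V l b)" by (rule sum.swap)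
      also have "\<dots> = (\<Sum>a<n. \<Sum>b<n. \<Sum>i<d. G i l * V i a * Ui a b * V l b)"
        by (intro sum.cong refl sum.swap)
      finally show "(\<Sum>i<d. \<Sum>a<n. \<Sum>b<n. G i l * V i a * Ui a b * V l b)
          = (\<Sum>a<n. \<Sum>b<n. \<Sum>i<d. G i l * V i a * Ui a b * V l b)" .
    qed
    also have "\<dots> = (\<Sum>l<d. \<Sum>a<n. \<Sum>b<n. W l a * Ui a b * V l b)"
      by (intro sum.cong refl) (simp add: GW flip: sum_distrib_right)
    also have "\<dots> = (\<Sum>l<d. \<Sum>b<n. \<Sum>a<n. W l a * Ui a b * V l b)"
      by (intro sum.cong refl sum.swap)
    also have "\<dots> = (\<Sum>l<d. \<Sum>b<n. th (l*n+b) * V l b)"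
      by (intro sum.cong refl) (simp add: WU flip: sum_distrib_right)
    finally show ?thesis .
  qed
  show ?thesis unfolding GM tv by simp
qed

lemma core3:
  fixes U Ui :: "nat \<Rightarrow> nat \<Rightarrow> real" and a y :: "nat \<Rightarrow> real"
  assumes psd: "0 \<le> (\<Sum>j<n. \<Sum>k<n. c j * U j k * c k)"
    and c_def: "\<And>j. j < n \<Longrightarrow> c j = a j - (\<Sum>l<n. Ui j l * y l)"
    and Usym: "\<And>i l. i < n \<Longrightarrow> l < n \<Longrightarrow> U i l = U l i"
    and UUi: "\<And>k b. k < n \<Longrightarrow> b < n \<Longrightarrow> (\<Sum>a<n. U k a * Ui a b) = (if k = b then 1 else 0)"
  shows "0 \<le> (\<Sum>j<n. \<Sum>k<n. a j * U j k * a k) - 2 * (\<Sum>j<n. a j * y j) + (\<Sum>j<n. \<Sum>k<n. y j * Ui j k * y k)"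
proof -
  define u where "u j = (\<Sum>l<n. Ui j l * y l)" for j
  have Uu: "(\<Sum>k<n. U j k * u k) = y j" if "j < n" for j
  proof -
    have "(\<Sum>k<n. U j k * u k) = (\<Sum>k<n. \<Sum>l<n. U j k * Ui k l * y l)"
      unfolding u_def by (simp add: sum_distrib_left mult_ac)
    also have "\<dots> = (\<Sum>l<n. (\<Sum>k<n. U j k * Ui k l) * y l)"
      by (subst sum.swap) (simp add: sum_distrib_right)
    also have "\<dots> = (\<Sum>l<n. if j = l then y l else 0)" by (intro sum.cong refl) (simp add: UUi that)
    also have "\<dots> = y j" using that by (simp add: sum.delta)
    finally show ?thesis .
  qed
  have e: "(\<Sum>j<n. \<Sum>k<n. c j * U j k * c k)
     = (\<Sum>j<n. \<Sum>k<n. a j * U j k * a k) - (\<Sum>j<n. a j * (\<Sum>k<n. U j k * u k))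
       - (\<Sum>k<n. a k * (\<Sum>j<n. U k j * u j)) + (\<Sum>j<n. u j * (\<Sum>k<n. U j k * u k))"
  proof -
    have "(\<Sum>j<n. \<Sum>k<n. c j * U j k * c k) = (\<Sum>j<n. \<Sum>k<n. (a j - u j) * U j k * (a k - u k))"
      by (intro sum.cong refl) (simp add: c_def u_def)
    also have "\<dots> = (\<Sum>j<n. \<Sum>k<n. a j * U j k * a k) - (\<Sum>j<n. \<Sum>k<n. a j * U j k * u k)
       - (\<Sum>j<n. \<Sum>k<n. u j * U j k * a k) + (\<Sum>j<n. \<Sum>k<n. u j * U j k * u k)"
      by (simp add: algebra_simps sum_subtractf sum.distrib)
    also have "(\<Sum>j<n. \<Sum>k<n. u j * U j k * a k) = (\<Sum>k<n. a k * (\<Sum>j<n. U k j * u j))"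
      by (subst sum.swap) (intro sum.cong refl, simp add: sum_distrib_left Usym mult_ac)
    finally show ?thesis by (simp add: sum_distrib_left mult_ac)
  qed
  have "(\<Sum>j<n. u j * (\<Sum>k<n. U j k * u k)) = (\<Sum>j<n. \<Sum>k<n. y j * Ui j k * y k)"
  proof -
    have "(\<Sum>j<n. u j * (\<Sum>k<n. U j k * u k)) = (\<Sum>j<n. u j * y j)" by (intro sum.cong refl) (simp add: Uu)
    then show ?thesis unfolding u_def by (simp add: sum_distrib_left sum_distrib_right mult_ac)
  qed
  then show ?thesis using psd unfolding e by (simp add: Uu)
qed


lemma sum_split_add: "(\<Sum>i<a+(b::nat). g i) = (\<Sum>i<a. g i) + (\<Sum>i<b. (g (a+i) :: real))"
  by (induction b) (simp_all add: add.assoc)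

lemma sum_mult_idx: "(\<Sum>c<(d::nat)*m. g c) = (\<Sum>i<d. \<Sum>p<m. (g (i*m+p) :: real))"
proof (induction d)
  case 0 then show ?case by simp
next
  case (Suc d)
  have "(\<Sum>c<Suc d * m. g c) = (\<Sum>c<d*m + m. g c)" by (simp add: add.commute)
  also have "\<dots> = (\<Sum>c<d*m. g c) + (\<Sum>p<m. g (d*m+p))" by (rule sum_split_add)
  finally show ?case using Suc by simp
qed

lemma mult_entry:
  fixes A B :: "real mat"
  assumes "i < dim_row A" "j < dim_col B" "dim_row B = dim_col A"
  shows "(A * B) $$ (i, j) = (\<Sum>k<dim_col A. A $$ (i, k) * B $$ (k, j))"
  using assms by (simp add: scalar_prod_def atLeast0LessThan)

lemma mv_entry:
  fixes A :: "real mat"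
  assumes "i < dim_row A" "dim_vec v = dim_col A"
  shows "(A *\<^sub>v v) $ i = (\<Sum>k<dim_col A. A $$ (i, k) * v $ k)"
  using assms by (simp add: scalar_prod_def atLeast0LessThan)

lemma qf_sum:
  fixes A :: "real mat"
  assumes "A \<in> carrier_mat k l" "u \<in> carrier_vec k" "v \<in> carrier_vec l"
  shows "u \<bullet> (A *\<^sub>v v) = (\<Sum>i<k. \<Sum>j<l. u $ i * A $$ (i, j) * v $ j)"
  using assms by (simp add: scalar_prod_def atLeast0LessThan sum_distrib_left mult.assoc)

lemma kron_dims: "dim_row (kron A B) = dim_row A * dim_row B" "dim_col (kron A B) = dim_col A * dim_col B"
  by (simp_all add: kron_def)

lemma kron_entry:
  assumes "i < dim_row A * dim_row B" "j < dim_col A * dim_col B"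
  shows "kron A B $$ (i, j) = A $$ (i div dim_row B, j div dim_col B) * B $$ (i mod dim_row B, j mod dim_col B)"
  using assms by (simp add: kron_def)

lemma idx_lt: "i < a \<Longrightarrow> k < c \<Longrightarrow> i*c + k < a*(c::nat)"
proof -
  assume "i < a" "k < c"
  then have "Suc i * c \<le> a * c" by (intro mult_le_mono1) simp
  then show ?thesis using \<open>k < c\<close> by simp
qed

lemma kron_entry2:
  assumes "A \<in> carrier_mat a b" "B \<in> carrier_mat c e" "i < a" "j < b" "k < c" "l < e"
  shows "kron A B $$ (i*c + k, j*e + l) = A $$ (i, j) * B $$ (k, l)"
  using assms idx_lt[of i a k c] idx_lt[of j b l e] by (simp add: kron_entry)

lemma col_mat_dims: "dim_row (col_mat v) = dim_vec v" "dim_col (col_mat v) = 1"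
  by (simp_all add: col_mat_def)

lemma col_mat_entry: "i < dim_vec v \<Longrightarrow> col_mat v $$ (i, 0) = v $ i"
  by (simp add: col_mat_def mat_of_cols_index)

lemma ffT_entry:
  assumes "v \<in> carrier_vec d" "i < d" "l < d"
  shows "(col_mat v * transpose_mat (col_mat v)) $$ (i, l) = v $ i * v $ l"
  using assms by (subst mult_entry) (auto simp: col_mat_dims col_mat_entry)

lemma kron_fx_entry:
  assumes "v \<in> carrier_vec d" "xv \<in> carrier_vec n" "k < d * n"
  shows "(kron (col_mat v) (1\<^sub>m n) *\<^sub>v xv) $ k = v $ (k div n) * xv $ (k mod n)"
proof -
  have n0: "0 < n" using assms(3) by (cases n) auto
  have kd: "k div n < d" using assms(3) by (simp add: less_mult_imp_div_less)
  have km: "k mod n < n" using n0 by simp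
  have "(kron (col_mat v) (1\<^sub>m n) *\<^sub>v xv) $ k = (\<Sum>c<n. kron (col_mat v) (1\<^sub>m n) $$ (k, c) * xv $ c)"
    using assms by (subst mv_entry) (auto simp: kron_dims col_mat_dims)
  also have "\<dots> = (\<Sum>c<n. (if c = k mod n then v $ (k div n) * xv $ c else 0))"
    using assms kd km by (intro sum.cong refl) (auto simp: kron_entry kron_dims col_mat_dims col_mat_entry)
  also have "\<dots> = v $ (k div n) * xv $ (k mod n)" using km by (simp add: sum.delta)
  finally show ?thesis .
qed

lemma W_entry_pt:
  fixes Y :: "real mat"
  assumes v: "v \<in> carrier_vec d" and Y: "Y \<in> carrier_mat (d*m) (d*m)" and p: "p < m" and q: "q < m"
  shows "(kron (transpose_mat (col_mat v)) (1\<^sub>m m) * Y * kron (col_mat v) (1\<^sub>m m)) $$ (p, q)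
       = (\<Sum>i<d. \<Sum>l<d. v $ i * v $ l * Y $$ (i*m+p, l*m+q))"
proof -
  let ?K1 = "kron (transpose_mat (col_mat v)) (1\<^sub>m m)" and ?K2 = "kron (col_mat v) (1\<^sub>m m)"
  have K1d: "?K1 \<in> carrier_mat m (d*m)" using v by (simp add: kron_dims col_mat_dims carrier_matI)
  have K2d: "?K2 \<in> carrier_mat (d*m) m" using v by (simp add: kron_dims col_mat_dims carrier_matI)
  have K1e: "?K1 $$ (p, i*m+r) = (if r = p then v $ i else 0)" if "i < d" "r < m" for i r
    using v p that idx_lt[of i d r m] by (simp add: kron_entry kron_dims col_mat_dims col_mat_entry)
  have K2e: "?K2 $$ (l*m+r, q) = (if r = q then v $ l else 0)" if "l < d" "r < m" for l r
    using v q that idx_lt[of l d r m] by (simp add: kron_entry kron_dims col_mat_dims col_mat_entry)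
  have K1Y: "(?K1 * Y) $$ (p, c) = (\<Sum>i<d. v $ i * Y $$ (i*m+p, c))" if c: "c < d*m" for c
  proof -
    have "(?K1 * Y) $$ (p, c) = (\<Sum>k<d*m. ?K1 $$ (p, k) * Y $$ (k, c))"
      using K1d Y p c by (subst mult_entry) auto
    also have "\<dots> = (\<Sum>i<d. \<Sum>r<m. ?K1 $$ (p, i*m+r) * Y $$ (i*m+r, c))" by (rule sum_mult_idx)
    also have "\<dots> = (\<Sum>i<d. \<Sum>r<m. if r = p then v $ i * Y $$ (i*m+r, c) else 0)"
      by (intro sum.cong refl) (simp add: K1e)
    also have "\<dots> = (\<Sum>i<d. v $ i * Y $$ (i*m+p, c))" using p by (simp add: sum.delta)
    finally show ?thesis .
  qed
  have "(?K1 * Y * ?K2) $$ (p, q) = (\<Sum>k<d*m. (?K1 * Y) $$ (p, k) * ?K2 $$ (k, q))"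
    using K1d K2d Y p q by (subst mult_entry) auto
  also have "\<dots> = (\<Sum>l<d. \<Sum>r<m. (?K1 * Y) $$ (p, l*m+r) * ?K2 $$ (l*m+r, q))" by (rule sum_mult_idx)
  also have "\<dots> = (\<Sum>l<d. \<Sum>r<m. if r = q then (\<Sum>i<d. v $ i * Y $$ (i*m+p, l*m+r)) * v $ l else 0)"
    by (intro sum.cong refl) (simp add: K2e K1Y idx_lt)
  also have "\<dots> = (\<Sum>l<d. (\<Sum>i<d. v $ i * Y $$ (i*m+p, l*m+q)) * v $ l)" using q by (simp add: sum.delta)
  also have "\<dots> = (\<Sum>l<d. \<Sum>i<d. v $ i * v $ l * Y $$ (i*m+p, l*m+q))"
    by (simp add: sum_distrib_right sum_distrib_left mult_ac)
  also have "\<dots> = (\<Sum>i<d. \<Sum>l<d. v $ i * v $ l * Y $$ (i*m+p, l*m+q))"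
    by (rule sum.swap)
  finally show ?thesis .
qed

lemma sum4_reorder:
  "(\<Sum>j\<in>A. \<Sum>k\<in>B. \<Sum>i\<in>C. \<Sum>l\<in>E. g i l j k) = (\<Sum>i\<in>C. \<Sum>l\<in>E. \<Sum>j\<in>A. \<Sum>k\<in>B. (g i l j k :: real))"
proof -
  have "(\<Sum>j\<in>A. \<Sum>k\<in>B. \<Sum>i\<in>C. \<Sum>l\<in>E. g i l j k) = (\<Sum>i\<in>C. \<Sum>j\<in>A. \<Sum>k\<in>B. \<Sum>l\<in>E. g i l j k)"
    by (rule rot3)
  also have "\<dots> = (\<Sum>i\<in>C. \<Sum>l\<in>E. \<Sum>j\<in>A. \<Sum>k\<in>B. g i l j k)"
    by (intro sum.cong refl rot3)
  finally show ?thesis .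
qed

lemma block_qf:
  fixes A B C Dm :: "real mat"
  assumes "A \<in> carrier_mat n n" "B \<in> carrier_mat n D" "C \<in> carrier_mat D n" "Dm \<in> carrier_mat D D"
    "u \<in> carrier_vec (n + D)"
  shows "u \<bullet> (four_block_mat A B C Dm *\<^sub>v u) =
     (\<Sum>i<n. \<Sum>j<n. u $ i * A $$ (i, j) * u $ j) + (\<Sum>i<n. \<Sum>j<D. u $ i * B $$ (i, j) * u $ (n+j))
   + (\<Sum>i<D. \<Sum>j<n. u $ (n+i) * C $$ (i, j) * u $ j) + (\<Sum>i<D. \<Sum>j<D. u $ (n+i) * Dm $$ (i, j) * u $ (n+j))"
proof -
  have M: "four_block_mat A B C Dm \<in> carrier_mat (n+D) (n+D)" using assms by simp
  have "u \<bullet> (four_block_mat A B C Dm *\<^sub>v u) = (\<Sum>i<n+D. \<Sum>j<n+D. u $ i * four_block_mat A B C Dm $$ (i, j) * u $ j)"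
    by (rule qf_sum[OF M assms(5,5)])
  also have "\<dots> = (\<Sum>i<n+D. (\<Sum>j<n. u $ i * four_block_mat A B C Dm $$ (i, j) * u $ j) + (\<Sum>j<D. u $ i * four_block_mat A B C Dm $$ (i, n+j) * u $ (n+j)))"
    by (simp add: sum_split_add)
  also have "\<dots> = (\<Sum>i<n. (\<Sum>j<n. u $ i * four_block_mat A B C Dm $$ (i, j) * u $ j) + (\<Sum>j<D. u $ i * four_block_mat A B C Dm $$ (i, n+j) * u $ (n+j)))
     + (\<Sum>i<D. (\<Sum>j<n. u $ (n+i) * four_block_mat A B C Dm $$ (n+i, j) * u $ j) + (\<Sum>j<D. u $ (n+i) * four_block_mat A B C Dm $$ (n+i, n+j) * u $ (n+j)))"
    by (rule sum_split_add)
  also have "\<dots> = (\<Sum>i<n. \<Sum>j<n. u $ i * A $$ (i, j) * u $ j) + (\<Sum>i<n. \<Sum>j<D. u $ i * B $$ (i, j) * u $ (n+j))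
   + (\<Sum>i<D. \<Sum>j<n. u $ (n+i) * C $$ (i, j) * u $ j) + (\<Sum>i<D. \<Sum>j<D. u $ (n+i) * Dm $$ (i, j) * u $ (n+j))"
  proof -
    have dims: "dim_row A = n" "dim_col A = n" "dim_row Dm = D" "dim_col Dm = D" using assms by auto
    show ?thesis by (simp add: sum.distrib dims)
  qed
  finally show ?thesis .
qed

lemma pt1:
  fixes U X Y :: "real mat" and fv z :: "real Matrix.vec" and S :: "nat \<Rightarrow> nat \<Rightarrow> real"
  assumes U: "U \<in> carrier_mat n n" and X: "X \<in> carrier_mat n (d*m)" and Y: "Y \<in> carrier_mat (d*m) (d*m)"
    and psd: "psd_mat (n + d*m) (four_block_mat U (-X) (-transpose_mat X) Y)"
    and fv: "fv \<in> carrier_vec d" and z: "z \<in> carrier_vec m"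
  shows "0 \<le> (\<Sum>i<d. \<Sum>l<d. fv$i * fv$l * ((\<Sum>p<m. \<Sum>q<m. z$p * Y$$(i*m+p, l*m+q) * z$q)
            - 2 * (\<Sum>j<n. S l j * (\<Sum>p<m. X$$(j, i*m+p) * z$p)) + (\<Sum>j<n. \<Sum>k<n. U$$(j,k) * S i j * S l k)))"
proof -
  define a where "a j = (\<Sum>i<d. fv$i * S i j)" for j
  define b where "b c = fv$(c div m) * z$(c mod m)" for c
  define V where "V i j = (\<Sum>p<m. X$$(j, i*m+p) * z$p)" for i j
  define M where "M i l = (\<Sum>p<m. \<Sum>q<m. z$p * Y$$(i*m+p, l*m+q) * z$q)" for i l
  define u where "u = vec (n + d*m) (\<lambda>i. if i < n then a i else b (i - n))"
  have u: "u \<in> carrier_vec (n + d*m)" by (simp add: u_def)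
  have ua: "u$j = a j" if "j < n" for j using that by (simp add: u_def)
  have ub: "u$(n+c) = b c" if "c < d*m" for c using that by (simp add: u_def)
  have dims: "dim_row X = n" "dim_col X = d*m" "dim_row Y = d*m" "dim_col Y = d*m" using X Y by auto
  have Xb: "(\<Sum>c<d*m. X$$(j,c) * b c) = (\<Sum>i<d. fv$i * V i j)" for j
  proof -
    have "(\<Sum>c<d*m. X$$(j,c) * b c) = (\<Sum>i<d. \<Sum>p<m. X$$(j, i*m+p) * b (i*m+p))" by (rule sum_mult_idx)
    also have "\<dots> = (\<Sum>i<d. fv$i * V i j)" unfolding V_def b_def
      by (intro sum.cong refl) (auto simp: sum_distrib_left mult_ac)
    finally show ?thesis .
  qed
  have q0: "0 \<le> u \<bullet> (four_block_mat U (-X) (-transpose_mat X) Y *\<^sub>v u)" using psd u by (simp add: psd_mat_def)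
  have q1: "u \<bullet> (four_block_mat U (-X) (-transpose_mat X) Y *\<^sub>v u) = (\<Sum>i<n. \<Sum>j<n. u $ i * U $$ (i, j) * u $ j) + (\<Sum>i<n. \<Sum>j<d*m. u $ i * (-X) $$ (i, j) * u $ (n+j))
   + (\<Sum>i<d*m. \<Sum>j<n. u $ (n+i) * (-transpose_mat X) $$ (i, j) * u $ j) + (\<Sum>i<d*m. \<Sum>j<d*m. u $ (n+i) * Y $$ (i, j) * u $ (n+j))"
    using U X Y u by (intro block_qf) auto
  have e1: "(\<Sum>i<n. \<Sum>j<n. u $ i * U $$ (i, j) * u $ j) = (\<Sum>i<d. \<Sum>l<d. fv$i * fv$l * (\<Sum>j<n. \<Sum>k<n. U$$(j,k) * S i j * S l k))"
  proof -
    have "(\<Sum>i<n. \<Sum>j<n. u $ i * U $$ (i, j) * u $ j) = (\<Sum>j<n. \<Sum>k<n. \<Sum>i<d. \<Sum>l<d. fv$i * fv$l * (U$$(j,k) * S i j * S l k))"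
      by (intro sum.cong refl) (simp add: ua a_def sum_distrib_left sum_distrib_right mult_ac)
    also have "\<dots> = (\<Sum>i<d. \<Sum>l<d. \<Sum>j<n. \<Sum>k<n. fv$i * fv$l * (U$$(j,k) * S i j * S l k))" by (rule sum4_reorder)
    finally show ?thesis by (simp add: sum_distrib_left)
  qed
  have e2: "(\<Sum>i<n. \<Sum>j<d*m. u $ i * (-X) $$ (i, j) * u $ (n+j)) = - (\<Sum>i<d. \<Sum>l<d. fv$i * fv$l * (\<Sum>j<n. S l j * V i j))"
  proof -
    have "(\<Sum>i<n. \<Sum>j<d*m. u $ i * (-X) $$ (i, j) * u $ (n+j)) = - (\<Sum>j<n. a j * (\<Sum>c<d*m. X$$(j,c) * b c))"
      by (simp add: ua ub dims sum_distrib_left mult_ac flip: sum_negf)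
    also have "\<dots> = - (\<Sum>j<n. \<Sum>i<d. \<Sum>l<d. fv$i * fv$l * (S l j * V i j))"
      unfolding Xb a_def by (simp add: sum_distrib_left sum_distrib_right mult_ac)
    also have "\<dots> = - (\<Sum>i<d. \<Sum>l<d. \<Sum>j<n. fv$i * fv$l * (S l j * V i j))"
    proof -
      have "(\<Sum>j<n. \<Sum>i<d. \<Sum>l<d. fv$i * fv$l * (S l j * V i j)) = (\<Sum>i<d. \<Sum>j<n. \<Sum>l<d. fv$i * fv$l * (S l j * V i j))"
        by (rule sum.swap)
      also have "\<dots> = (\<Sum>i<d. \<Sum>l<d. \<Sum>j<n. fv$i * fv$l * (S l j * V i j))" by (intro sum.cong refl sum.swap)
      finally show ?thesis by simp
    qed
    finally show ?thesis by (simp add: sum_distrib_left)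
  qed
  have e3: "(\<Sum>i<d*m. \<Sum>j<n. u $ (n+i) * (-transpose_mat X) $$ (i, j) * u $ j) = (\<Sum>i<n. \<Sum>j<d*m. u $ i * (-X) $$ (i, j) * u $ (n+j))"
    by (subst sum.swap) (intro sum.cong refl, simp add: dims mult_ac)
  have e4: "(\<Sum>i<d*m. \<Sum>j<d*m. u $ (n+i) * Y $$ (i, j) * u $ (n+j)) = (\<Sum>i<d. \<Sum>l<d. fv$i * fv$l * M i l)"
  proof -
    have "(\<Sum>i<d*m. \<Sum>j<d*m. u $ (n+i) * Y $$ (i, j) * u $ (n+j)) = (\<Sum>c<d*m. \<Sum>j<d*m. b c * Y $$ (c, j) * b j)"
      by (intro sum.cong refl) (simp add: ub)
    also have "\<dots> = (\<Sum>i<d. \<Sum>p<m. \<Sum>l<d. \<Sum>q<m. b (i*m+p) * Y $$ (i*m+p, l*m+q) * b (l*m+q))"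
      by (simp add: sum_mult_idx)
    also have "\<dots> = (\<Sum>i<d. \<Sum>l<d. \<Sum>p<m. \<Sum>q<m. b (i*m+p) * Y $$ (i*m+p, l*m+q) * b (l*m+q))"
      by (intro sum.cong refl sum.swap)
    also have "\<dots> = (\<Sum>i<d. \<Sum>l<d. fv$i * fv$l * M i l)"
      unfolding M_def b_def by (intro sum.cong refl) (auto simp: sum_distrib_left mult_ac)
    finally show ?thesis .
  qed
  have fin: "(\<Sum>i<d. \<Sum>l<d. fv$i * fv$l * (M i l - 2 * (\<Sum>j<n. S l j * V i j) + (\<Sum>j<n. \<Sum>k<n. U$$(j,k) * S i j * S l k)))
     = (\<Sum>i<d. \<Sum>l<d. fv$i * fv$l * M i l) - 2 * (\<Sum>i<d. \<Sum>l<d. fv$i * fv$l * (\<Sum>j<n. S l j * V i j))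
       + (\<Sum>i<d. \<Sum>l<d. fv$i * fv$l * (\<Sum>j<n. \<Sum>k<n. U$$(j,k) * S i j * S l k))"
    by (simp add: ring_distribs sum_subtractf sum.distrib sum_distrib_left mult_ac)
  have "0 \<le> (\<Sum>i<d. \<Sum>l<d. fv$i * fv$l * (M i l - 2 * (\<Sum>j<n. S l j * V i j) + (\<Sum>j<n. \<Sum>k<n. U$$(j,k) * S i j * S l k)))"
    using q0 unfolding q1 e1 e3 e2 e4 fin by linarith
  then show ?thesis unfolding M_def V_def .
qed

lemma pd_psd:
  assumes "pd_mat k A" "v \<in> carrier_vec k"
  shows "0 \<le> v \<bullet> (A *\<^sub>v v)"
proof (cases "v = 0\<^sub>v k")
  case True
  have "A *\<^sub>v v \<in> carrier_vec k" using assms unfolding pd_mat_def by auto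
  then show ?thesis using True by simp
next
  case False
  then show ?thesis using assms unfolding pd_mat_def by (meson less_imp_le)
qed

lemma sym_inv:
  fixes A B :: "real mat"
  assumes A: "A \<in> carrier_mat k k" and B: "B \<in> carrier_mat k k" and AB: "A * B = 1\<^sub>m k" and BA: "B * A = 1\<^sub>m k"
    and sym: "transpose_mat A = A"
  shows "transpose_mat B = B"
proof -
  have "transpose_mat B = transpose_mat B * (A * B)" using AB B by simp
  also have "\<dots> = (transpose_mat B * A) * B" using A B by (simp add: assoc_mult_mat)
  also have "transpose_mat B * A = transpose_mat B * transpose_mat A" using sym by simp
  also have "\<dots> = transpose_mat (A * B)" using A B by (simp add: transpose_mult)
  also have "\<dots> = 1\<^sub>m k" using AB by simp
  finally show ?thesis using B by simp
qed

lemma pd_inv: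
  assumes pd: "pd_mat k A"
  shows "A * mat_inv A = 1\<^sub>m k" "mat_inv A * A = 1\<^sub>m k" "mat_inv A \<in> carrier_mat k k"
    "transpose_mat (mat_inv A) = mat_inv A"
proof -
  have Ac: "A \<in> carrier_mat k k" using pd unfolding pd_mat_def by auto
  have nz: "\<not> (\<exists>v. v \<in> carrier_vec k \<and> v \<noteq> 0\<^sub>v k \<and> A *\<^sub>v v = 0\<^sub>v k)"
  proof
    assume "\<exists>v. v \<in> carrier_vec k \<and> v \<noteq> 0\<^sub>v k \<and> A *\<^sub>v v = 0\<^sub>v k"
    then obtain v where v: "v \<in> carrier_vec k" "v \<noteq> 0\<^sub>v k" "A *\<^sub>v v = 0\<^sub>v k" by blast
    then have "0 < v \<bullet> (A *\<^sub>v v)" using pd unfolding pd_mat_def by auto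
    then show False using v by simp
  qed
  have det: "Determinant.det A \<noteq> 0" using det_0_iff_vec_prod_zero[OF Ac] nz by simp
  have U: "A \<in> Units (ring_mat TYPE(real) k ())" by (rule det_non_zero_imp_unit[OF Ac det])
  obtain B where B: "mat_inverse A = Some B"
    using mat_inverse(1)[OF Ac, of "()"] U by (cases "mat_inverse A") auto
  have inv: "mat_inv A = B" unfolding mat_inv_def B by simp
  have props: "A * B = 1\<^sub>m k" "B * A = 1\<^sub>m k" "B \<in> carrier_mat k k" using mat_inverse(2)[OF Ac B] by auto
  show "A * mat_inv A = 1\<^sub>m k" "mat_inv A * A = 1\<^sub>m k" "mat_inv A \<in> carrier_mat k k" using props inv by auto
  have "transpose_mat A = A" using pd unfolding pd_mat_def sym_mat_def by auto
  then show "transpose_mat (mat_inv A) = mat_inv A" unfolding inv using sym_inv[OF Ac props(3,1,2)] by simp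
qed

lemma inv_sum:
  fixes A B :: "real mat"
  assumes "A \<in> carrier_mat k k" "B \<in> carrier_mat k k" "A * B = 1\<^sub>m k" "i < k" "j < k"
  shows "(\<Sum>l<k. A $$ (i, l) * B $$ (l, j)) = (if i = j then 1 else 0)"
proof -
  have "(A * B) $$ (i, j) = (\<Sum>l<k. A $$ (i, l) * B $$ (l, j))" using assms by (subst mult_entry) auto
  then show ?thesis using assms by simp
qed

lemma sym_block:
  fixes U X Y :: "real mat"
  assumes "U \<in> carrier_mat n n" "X \<in> carrier_mat n D" "Y \<in> carrier_mat D D"
    "transpose_mat U = U" "transpose_mat Y = Y"
  shows "sym_mat (four_block_mat U (-X) (-transpose_mat X) Y)"
proof -
  have c2: "-X \<in> carrier_mat n D" and c3: "-transpose_mat X \<in> carrier_mat D n" using assms by auto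
  show ?thesis unfolding sym_mat_def
    by (simp add: transpose_four_block_mat[OF assms(1) c2 c3 assms(3)] transpose_uminus assms(4,5))
qed

lemma XUX_entry:
  fixes Ui X :: "real mat"
  assumes Ui: "Ui \<in> carrier_mat n n" and X: "X \<in> carrier_mat n D" and c: "c < D" "c' < D"
  shows "(transpose_mat X * Ui * X) $$ (c, c') = (\<Sum>j<n. \<Sum>k<n. X $$ (j, c) * Ui $$ (j, k) * X $$ (k, c'))"
proof -
  have "(transpose_mat X * Ui * X) $$ (c, c') = (\<Sum>k<n. (transpose_mat X * Ui) $$ (c, k) * X $$ (k, c'))"
    using c X Ui by (subst mult_entry) auto
  also have "\<dots> = (\<Sum>k<n. (\<Sum>j<n. X $$ (j, c) * Ui $$ (j, k)) * X $$ (k, c'))"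
    using c X Ui by (intro sum.cong refl) (subst mult_entry, auto)
  also have "\<dots> = (\<Sum>k<n. \<Sum>j<n. X $$ (j, c) * Ui $$ (j, k) * X $$ (k, c'))" by (simp add: sum_distrib_right)
  also have "\<dots> = (\<Sum>j<n. \<Sum>k<n. X $$ (j, c) * Ui $$ (j, k) * X $$ (k, c'))" by (rule sum.swap)
  finally show ?thesis .
qed

lemma XUX_sym:
  fixes Ui X :: "real mat"
  assumes Ui: "Ui \<in> carrier_mat n n" and X: "X \<in> carrier_mat n D" and Uisym: "transpose_mat Ui = Ui"
  shows "transpose_mat (transpose_mat X * Ui * X) = transpose_mat X * Ui * X"
proof -
  have "transpose_mat (transpose_mat X * Ui * X) = transpose_mat X * transpose_mat (transpose_mat X * Ui)"
    using X Ui by (subst transpose_mult[where n = n]) auto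
  also have "transpose_mat (transpose_mat X * Ui) = transpose_mat Ui * X"
    using X Ui by (subst transpose_mult[where n = n]) auto
  finally show ?thesis using X Ui Uisym by (simp add: assoc_mult_mat[where n\<^sub>2 = n])
qed

lemma blk2:
  fixes U Ui X :: "real mat"
  assumes U: "U \<in> carrier_mat n n" and Ui: "Ui \<in> carrier_mat n n" and UUi: "U * Ui = 1\<^sub>m n"
    and Upd: "pd_mat n U" and Uisym: "transpose_mat Ui = Ui" and X: "X \<in> carrier_mat n D"
  shows "psd_mat (n + D) (four_block_mat U (-X) (-transpose_mat X) (transpose_mat X * Ui * X))"
proof -
  let ?Y = "transpose_mat X * Ui * X"
  have Y: "?Y \<in> carrier_mat D D" using X Ui by auto
  have Usym: "transpose_mat U = U" using Upd unfolding pd_mat_def sym_mat_def by auto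
  have Ysym: "transpose_mat ?Y = ?Y"
  proof -
    have "transpose_mat ?Y = transpose_mat X * transpose_mat (transpose_mat X * Ui)"
      using X Ui by (subst transpose_mult[where n = n]) auto
    also have "transpose_mat (transpose_mat X * Ui) = transpose_mat Ui * X"
      using X Ui by (subst transpose_mult[where n = n]) auto
    finally show ?thesis using X Ui Uisym by (simp add: assoc_mult_mat[where n\<^sub>2 = n])
  qed
  have dims: "dim_row X = n" "dim_col X = D" "dim_row Ui = n" "dim_col Ui = n" using X Ui by auto
  have Us: "U $$ (i, l) = U $$ (l, i)" if "i < n" "l < n" for i l
    using Usym that U by (metis carrier_matD index_transpose_mat)
  have UUis: "(\<Sum>a<n. U $$ (k, a) * Ui $$ (a, b)) = (if k = b then 1 else 0)" if "k < n" "b < n" for k b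
    using inv_sum[OF U Ui UUi that] .
  have Yent: "?Y $$ (c, c') = (\<Sum>j<n. \<Sum>k<n. X $$ (j, c) * Ui $$ (j, k) * X $$ (k, c'))" if "c < D" "c' < D" for c c'
  proof -
    have "?Y $$ (c, c') = (\<Sum>k<n. (transpose_mat X * Ui) $$ (c, k) * X $$ (k, c'))"
      using that X Ui by (subst mult_entry) auto
    also have "\<dots> = (\<Sum>k<n. (\<Sum>j<n. X $$ (j, c) * Ui $$ (j, k)) * X $$ (k, c'))"
      using that X Ui by (intro sum.cong refl) (subst mult_entry, auto)
    also have "\<dots> = (\<Sum>k<n. \<Sum>j<n. X $$ (j, c) * Ui $$ (j, k) * X $$ (k, c'))" by (simp add: sum_distrib_right)
    also have "\<dots> = (\<Sum>j<n. \<Sum>k<n. X $$ (j, c) * Ui $$ (j, k) * X $$ (k, c'))" by (rule sum.swap)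
    finally show ?thesis .
  qed
  show ?thesis unfolding psd_mat_def
  proof (intro conjI ballI)
    show "four_block_mat U (-X) (-transpose_mat X) ?Y \<in> carrier_mat (n + D) (n + D)" using U X Y by auto
    show "sym_mat (four_block_mat U (-X) (-transpose_mat X) ?Y)" by (rule sym_block[OF U X Y Usym Ysym])
    fix u :: "real Matrix.vec" assume u: "u \<in> carrier_vec (n + D)"
    define y where "y j = (\<Sum>c<D. X $$ (j, c) * u $ (n+c))" for j
    define cc where "cc = vec n (\<lambda>j. u $ j - (\<Sum>l<n. Ui $$ (j, l) * y l))"
    have q1: "u \<bullet> (four_block_mat U (-X) (-transpose_mat X) ?Y *\<^sub>v u) = (\<Sum>i<n. \<Sum>j<n. u $ i * U $$ (i, j) * u $ j) + (\<Sum>i<n. \<Sum>j<D. u $ i * (-X) $$ (i, j) * u $ (n+j))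
     + (\<Sum>i<D. \<Sum>j<n. u $ (n+i) * (-transpose_mat X) $$ (i, j) * u $ j) + (\<Sum>i<D. \<Sum>j<D. u $ (n+i) * ?Y $$ (i, j) * u $ (n+j))"
      using U X Y u by (intro block_qf) auto
    have e2: "(\<Sum>i<n. \<Sum>j<D. u $ i * (-X) $$ (i, j) * u $ (n+j)) = - (\<Sum>j<n. u $ j * y j)"
      unfolding y_def by (simp add: dims sum_distrib_left mult_ac flip: sum_negf)
    have e3: "(\<Sum>i<D. \<Sum>j<n. u $ (n+i) * (-transpose_mat X) $$ (i, j) * u $ j) = (\<Sum>i<n. \<Sum>j<D. u $ i * (-X) $$ (i, j) * u $ (n+j))"
      by (subst sum.swap) (intro sum.cong refl, simp add: dims mult_ac)
    have e4: "(\<Sum>i<D. \<Sum>j<D. u $ (n+i) * ?Y $$ (i, j) * u $ (n+j)) = (\<Sum>j<n. \<Sum>k<n. y j * Ui $$ (j, k) * y k)"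
    proof -
      have "(\<Sum>i<D. \<Sum>j<D. u $ (n+i) * ?Y $$ (i, j) * u $ (n+j))
          = (\<Sum>i<D. \<Sum>i'<D. \<Sum>j<n. \<Sum>k<n. (X $$ (j, i) * u $ (n+i)) * Ui $$ (j, k) * (X $$ (k, i') * u $ (n+i')))"
        by (intro sum.cong refl) (simp add: Yent sum_distrib_left sum_distrib_right mult_ac)
      also have "\<dots> = (\<Sum>j<n. \<Sum>k<n. \<Sum>i<D. \<Sum>i'<D. (X $$ (j, i) * u $ (n+i)) * Ui $$ (j, k) * (X $$ (k, i') * u $ (n+i')))"
        by (rule sum4_reorder)
      also have "\<dots> = (\<Sum>j<n. \<Sum>k<n. y j * Ui $$ (j, k) * y k)"
        unfolding y_def by (intro sum.cong refl) (simp add: sum_distrib_left sum_distrib_right mult_ac)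
      finally show ?thesis .
    qed
    have ccv: "cc \<in> carrier_vec n" by (simp add: cc_def)
    have psd0: "0 \<le> (\<Sum>j<n. \<Sum>k<n. cc $ j * U $$ (j, k) * cc $ k)"
      using pd_psd[OF Upd ccv] qf_sum[OF U ccv ccv] by simp
    have "0 \<le> (\<Sum>j<n. \<Sum>k<n. u $ j * U $$ (j, k) * u $ k) - 2 * (\<Sum>j<n. u $ j * y j) + (\<Sum>j<n. \<Sum>k<n. y j * Ui $$ (j, k) * y k)"
      by (rule core3[where c = "\<lambda>j. cc $ j", OF psd0]) (auto simp: cc_def Us UUis)
    then show "0 \<le> u \<bullet> (four_block_mat U (-X) (-transpose_mat X) ?Y *\<^sub>v u)"
      unfolding q1 e3 e2 e4 by linarith
  qed
qed

locale L2setup =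
  fixes K :: "real set" and w :: "real \<Rightarrow> real" and d n :: nat and f x :: "real \<Rightarrow> real Matrix.vec"
  assumes K_meas: "K \<in> sets lebesgue" and w_int: "set_integrable lebesgue K w"
    and w_nonneg: "\<forall>\<tau>\<in>K. w \<tau> \<ge> 0"
    and f_L2: "weighted_L2 K w d f" and x_L2: "weighted_L2 K w n x"
begin

lemma w_meas: "set_borel_measurable lebesgue K w"
  using w_int unfolding set_integrable_def set_borel_measurable_def
  by (rule borel_measurable_integrable)

lemma f_car: "f t \<in> carrier_vec d" and x_car: "x t \<in> carrier_vec n"
  using f_L2 x_L2 unfolding weighted_L2_def by auto

lemma int_ff: "i < d \<Longrightarrow> j < d \<Longrightarrow> set_integrable lebesgue K (\<lambda>t. w t * (f t $ i * f t $ j))"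
  apply (rule si_prod[where A = "\<lambda>t. f t \<bullet> f t" and B = "\<lambda>t. f t \<bullet> f t"])
  using f_L2 w_meas w_nonneg sq_le_sp[OF f_car] unfolding weighted_L2_def by auto

lemma int_fx: "i < d \<Longrightarrow> j < n \<Longrightarrow> set_integrable lebesgue K (\<lambda>t. w t * (f t $ i * x t $ j))"
  apply (rule si_prod[where A = "\<lambda>t. f t \<bullet> f t" and B = "\<lambda>t. x t \<bullet> x t"])
  using f_L2 x_L2 w_meas w_nonneg sq_le_sp[OF f_car] sq_le_sp[OF x_car] unfolding weighted_L2_def by auto

lemma int_xx: "i < n \<Longrightarrow> j < n \<Longrightarrow> set_integrable lebesgue K (\<lambda>t. w t * (x t $ i * x t $ j))"
  apply (rule si_prod[where A = "\<lambda>t. x t \<bullet> x t" and B = "\<lambda>t. x t \<bullet> x t"])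
  using x_L2 w_meas w_nonneg sq_le_sp[OF x_car] unfolding weighted_L2_def by auto


abbreviation "Gi i l \<equiv> LINT t:K|lebesgue. w t * (f t $ i * f t $ l)"
abbreviation "Th i j \<equiv> LINT t:K|lebesgue. w t * (f t $ i * x t $ j)"

lemma intP:
  assumes "\<forall>t\<in>K. 0 \<le> (\<Sum>i<d. \<Sum>l<d. f t $ i * f t $ l * E i l)"
  shows "0 \<le> (\<Sum>i<d. \<Sum>l<d. Gi i l * E i l)"
proof -
  have "(\<Sum>i<d. \<Sum>l<d. Gi i l * E i l)
      = (\<Sum>i<d. \<Sum>l<d. LINT t:K|lebesgue. w t * (f t $ i * f t $ l) * E i l)"
    by simp
  also have "\<dots> = (\<Sum>i<d. LINT t:K|lebesgue. (\<Sum>l<d. w t * (f t $ i * f t $ l) * E i l))"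
    by (intro sum.cong refl set_integral_sum'[symmetric] set_integrable_mult_left int_ff) auto
  also have "\<dots> = (LINT t:K|lebesgue. (\<Sum>i<d. \<Sum>l<d. w t * (f t $ i * f t $ l) * E i l))"
    by (intro set_integral_sum'[symmetric] set_integrable_sum' set_integrable_mult_left int_ff) auto
  also have "\<dots> \<ge> 0"
  proof (rule set_integral_nonneg')
    fix t assume t: "t \<in> K"
    have "(\<Sum>i<d. \<Sum>l<d. w t * (f t $ i * f t $ l) * E i l) = w t * (\<Sum>i<d. \<Sum>l<d. f t $ i * f t $ l * E i l)"
      by (simp add: sum_distrib_left mult.assoc)
    also have "\<dots> \<ge> 0" using assms w_nonneg t by simp
    finally show "0 \<le> (\<Sum>i<d. \<Sum>l<d. w t * (f t $ i * f t $ l) * E i l)" .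
  qed
  finally show ?thesis .
qed

lemma pw_expand:
  fixes a :: "nat \<Rightarrow> real"
  shows "(\<Sum>j<n. \<Sum>k<n. U j k * ((a j - (\<Sum>i<d. p i * S i j)) * (a k - (\<Sum>l<d. p l * S l k))))
    = (\<Sum>j<n. \<Sum>k<n. U j k * (a j * a k))
      - (\<Sum>j<n. \<Sum>k<n. \<Sum>l<d. U j k * S l k * (p l * a j))
      - (\<Sum>j<n. \<Sum>k<n. \<Sum>i<d. U j k * S i j * (p i * a k))
      + (\<Sum>j<n. \<Sum>k<n. \<Sum>i<d. \<Sum>l<d. U j k * S i j * S l k * (p i * p l))"
proof -
  have e: "U j k * ((a j - (\<Sum>i<d. p i * S i j)) * (a k - (\<Sum>l<d. p l * S l k)))
    = U j k * (a j * a k) - (\<Sum>l<d. U j k * S l k * (p l * a j)) - (\<Sum>i<d. U j k * S i j * (p i * a k))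
      + (\<Sum>i<d. \<Sum>l<d. U j k * S i j * S l k * (p i * p l))" for j k
  proof -
    let ?A = "\<Sum>i<d. p i * S i j" and ?B = "\<Sum>l<d. p l * S l k"
    have 1: "U j k * ((a j - ?A) * (a k - ?B)) = U j k * (a j * a k) - U j k * (a j * ?B) - U j k * (?A * a k) + U j k * (?A * ?B)"
      by (simp add: algebra_simps)
    have 2: "U j k * (a j * ?B) = (\<Sum>l<d. U j k * S l k * (p l * a j))"
      by (simp add: sum_distrib_left mult_ac)
    have 3: "U j k * (?A * a k) = (\<Sum>i<d. U j k * S i j * (p i * a k))"
      by (simp add: sum_distrib_left sum_distrib_right mult_ac)
    have 4: "U j k * (?A * ?B) = (\<Sum>i<d. \<Sum>l<d. U j k * S i j * S l k * (p i * p l))"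
      unfolding sum_product by (simp add: sum_distrib_left mult_ac)
    show ?thesis unfolding 1 2 3 4 ..
  qed
  show ?thesis
    by (simp add: e sum_subtractf sum.distrib)
qed


lemmas intsimps = set_integral_sum' set_integrable_sum' set_integrable_mult_right
  int_ff int_fx int_xx set_integral_add set_integral_diff

lemma intQ:
  assumes "\<forall>t\<in>K. 0 \<le> (\<Sum>j<n. \<Sum>k<n. U j k * ((x t $ j - (\<Sum>i<d. f t $ i * S i j)) * (x t $ k - (\<Sum>l<d. f t $ l * S l k))))"
  shows "0 \<le> (LINT t:K|lebesgue. w t * (\<Sum>j<n. \<Sum>k<n. U j k * (x t $ j * x t $ k)))
      - (\<Sum>j<n. \<Sum>k<n. \<Sum>l<d. U j k * S l k * Th l j)
      - (\<Sum>j<n. \<Sum>k<n. \<Sum>i<d. U j k * S i j * Th i k)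
      + (\<Sum>j<n. \<Sum>k<n. \<Sum>i<d. \<Sum>l<d. U j k * S i j * S l k * Gi i l)"
proof -
  define P1 where "P1 t = (\<Sum>j<n. \<Sum>k<n. U j k * (w t * (x t $ j * x t $ k)))" for t
  define P2 where "P2 t = (\<Sum>j<n. \<Sum>k<n. \<Sum>l<d. U j k * S l k * (w t * (f t $ l * x t $ j)))" for t
  define P3 where "P3 t = (\<Sum>j<n. \<Sum>k<n. \<Sum>i<d. U j k * S i j * (w t * (f t $ i * x t $ k)))" for t
  define P4 where "P4 t = (\<Sum>j<n. \<Sum>k<n. \<Sum>i<d. \<Sum>l<d. U j k * S i j * S l k * (w t * (f t $ i * f t $ l)))" for t
  have i1: "set_integrable lebesgue K P1" unfolding P1_def
    by (intro sintegrable2 set_integrable_mult_right int_xx) auto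
  have i2: "set_integrable lebesgue K P2" unfolding P2_def
    by (intro sintegrable3 set_integrable_mult_right int_fx) auto
  have i3: "set_integrable lebesgue K P3" unfolding P3_def
    by (intro sintegrable3 set_integrable_mult_right int_fx) auto
  have i4: "set_integrable lebesgue K P4" unfolding P4_def
    by (intro sintegrable4 set_integrable_mult_right int_ff) auto
  have v1: "(LINT t:K|lebesgue. P1 t) = (LINT t:K|lebesgue. w t * (\<Sum>j<n. \<Sum>k<n. U j k * (x t $ j * x t $ k)))"
    unfolding P1_def by (simp add: sum_distrib_left mult_ac)
  have v2: "(LINT t:K|lebesgue. P2 t) = (\<Sum>j<n. \<Sum>k<n. \<Sum>l<d. U j k * S l k * Th l j)"
    unfolding P2_def by (subst sint3) (auto intro!: set_integrable_mult_right int_fx)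
  have v3: "(LINT t:K|lebesgue. P3 t) = (\<Sum>j<n. \<Sum>k<n. \<Sum>i<d. U j k * S i j * Th i k)"
    unfolding P3_def by (subst sint3) (auto intro!: set_integrable_mult_right int_fx)
  have v4: "(LINT t:K|lebesgue. P4 t) = (\<Sum>j<n. \<Sum>k<n. \<Sum>i<d. \<Sum>l<d. U j k * S i j * S l k * Gi i l)"
    unfolding P4_def by (subst sint4) (auto intro!: set_integrable_mult_right int_ff)
  have pw: "w t * (\<Sum>j<n. \<Sum>k<n. U j k * ((x t $ j - (\<Sum>i<d. f t $ i * S i j)) * (x t $ k - (\<Sum>l<d. f t $ l * S l k))))
     = P1 t - P2 t - P3 t + P4 t" for t
    unfolding pw_expand P1_def P2_def P3_def P4_def
    by (simp add: sum_distrib_left right_diff_distrib distrib_left mult_ac)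
  have "0 \<le> (LINT t:K|lebesgue. P1 t - P2 t - P3 t + P4 t)"
    unfolding pw[symmetric] using assms w_nonneg by (intro set_integral_nonneg') auto
  also have "\<dots> = (LINT t:K|lebesgue. P1 t) - (LINT t:K|lebesgue. P2 t) - (LINT t:K|lebesgue. P3 t) + (LINT t:K|lebesgue. P4 t)"
    using i1 i2 i3 i4 by (simp add: set_integral_add set_integral_diff)
  finally show ?thesis unfolding v1 v2 v3 v4 .
qed


lemma G_ent: "i < d \<Longrightarrow> l < d \<Longrightarrow>
  mat_integral K w d d (\<lambda>\<tau>. col_mat (f \<tau>) * transpose_mat (col_mat (f \<tau>))) $$ (i, l) = Gi i l"
  by (simp add: mat_integral_def ffT_entry[OF f_car])

lemma th_ent: "i < d \<Longrightarrow> j < n \<Longrightarrow>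
  vec_integral K w (d*n) (\<lambda>\<tau>. kron (col_mat (f \<tau>)) (1\<^sub>m n) *\<^sub>v x \<tau>) $ (i*n+j) = Th i j"
  using idx_lt[of i d j n] by (simp add: vec_integral_def kron_fx_entry[OF f_car x_car])

lemma W_ent:
  assumes Y: "Y \<in> carrier_mat (d*m) (d*m)" and p: "p < m" and q: "q < m"
  shows "mat_integral K w m m (\<lambda>\<tau>. kron (transpose_mat (col_mat (f \<tau>))) (1\<^sub>m m) * Y * kron (col_mat (f \<tau>)) (1\<^sub>m m)) $$ (p, q)
    = (\<Sum>i<d. \<Sum>l<d. Gi i l * Y $$ (i*m+p, l*m+q))"
proof -
  have "mat_integral K w m m (\<lambda>\<tau>. kron (transpose_mat (col_mat (f \<tau>))) (1\<^sub>m m) * Y * kron (col_mat (f \<tau>)) (1\<^sub>m m)) $$ (p, q)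
      = (LINT t:K|lebesgue. (\<Sum>i<d. \<Sum>l<d. Y $$ (i*m+p, l*m+q) * (w t * (f t $ i * f t $ l))))"
    using p q by (simp add: mat_integral_def W_entry_pt[OF f_car Y] sum_distrib_left mult_ac)
  also have "\<dots> = (\<Sum>i<d. \<Sum>l<d. LINT t:K|lebesgue. Y $$ (i*m+p, l*m+q) * (w t * (f t $ i * f t $ l)))"
    by (rule sint2) (auto intro!: set_integrable_mult_right int_ff)
  also have "\<dots> = (\<Sum>i<d. \<Sum>l<d. Gi i l * Y $$ (i*m+p, l*m+q))" by (simp add: mult.commute)
  finally show ?thesis .
qed

end



theorem theorem3:
  fixes K :: "real set" and w :: "real \<Rightarrow> real"
    and d n \<rho> :: nat
    and f x :: "real \<Rightarrow> real Matrix.vec"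
    and U \<Upsilon> :: "real mat" and z :: "real Matrix.vec"
  assumes K_meas: "K \<in> sets lebesgue" and K_nonnull: "emeasure lebesgue K \<noteq> 0"
    and w_int: "set_integrable lebesgue K w"
    and w_nonneg: "\<forall>\<tau>\<in>K. w \<tau> \<ge> 0"
    and w_zeros: "countable {\<tau>\<in>K. w \<tau> = 0}"
    and f_L2: "weighted_L2 K w d f"
    and Finv_pd: "pd_mat d (mat_integral K w d d (\<lambda>\<tau>. col_mat (f \<tau>) * transpose_mat (col_mat (f \<tau>))))"
    and U_pd: "pd_mat n U"
    and x_L2: "weighted_L2 K w n x"
    and Ups_dim: "\<Upsilon> \<in> carrier_mat (d * n) (\<rho> * n)"
    and z_dim: "z \<in> carrier_vec (\<rho> * n)"
    and Ups_z: "\<Upsilon> *\<^sub>v z = vec_integral K w (d * n) (\<lambda>\<tau>. kron (col_mat (f \<tau>)) (1\<^sub>m n) *\<^sub>v x \<tau>)"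
  shows
    "let Fs = mat_inv (mat_integral K w d d (\<lambda>\<tau>. col_mat (f \<tau>) * transpose_mat (col_mat (f \<tau>))));
         \<theta> = vec_integral K w (d * n) (\<lambda>\<tau>. kron (col_mat (f \<tau>)) (1\<^sub>m n) *\<^sub>v x \<tau>);
         W = (\<lambda>Y. mat_integral K w (\<rho> * n) (\<rho> * n)
                (\<lambda>\<tau>. kron (transpose_mat (col_mat (f \<tau>))) (1\<^sub>m (\<rho> * n)) * Y
                       * kron (col_mat (f \<tau>)) (1\<^sub>m (\<rho> * n))));
         LHS = (\<lambda>X Y. scalar_prod z
                ((transpose_mat \<Upsilon> * col_stack d n (\<rho> * n) X
                  + transpose_mat (col_stack d n (\<rho> * n) X) * \<Upsilon> - W Y) *\<^sub>v z));
         RHS = scalar_prod \<theta> (kron Fs U *\<^sub>v \<theta>)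
     in (\<forall>X Y. X \<in> carrier_mat n (\<rho> * d * n) \<longrightarrow>
               Y \<in> carrier_mat (\<rho> * d * n) (\<rho> * d * n) \<longrightarrow> sym_mat Y \<longrightarrow>
               psd_mat (n + \<rho> * d * n) (four_block_mat U (- X) (- transpose_mat X) Y) \<longrightarrow>
               LHS X Y \<le> RHS)
      \<and> (\<forall>X. X \<in> carrier_mat n (\<rho> * d * n) \<longrightarrow> col_stack d n (\<rho> * n) X = kron Fs U * \<Upsilon> \<longrightarrow>
               (let Y = transpose_mat X * mat_inv U * X in
                  sym_mat Y \<and>
                  psd_mat (n + \<rho> * d * n) (four_block_mat U (- X) (- transpose_mat X) Y) \<and>
                  LHS X Y = RHS))
      \<and> (\<exists>X. X \<in> carrier_mat n (\<rho> * d * n) \<and> col_stack d n (\<rho> * n) X = kron Fs U * \<Upsilon>)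
      \<and> RHS \<le> (LINT \<tau>:K|lebesgue. w \<tau> * scalar_prod (x \<tau>) (U *\<^sub>v x \<tau>))"
proof -
  interpret L: L2setup K w d n f x
    using K_meas w_int w_nonneg f_L2 x_L2 by unfold_locales
  define m where "m = \<rho> * n"
  define Gm where "Gm = mat_integral K w d d (\<lambda>\<tau>. col_mat (f \<tau>) * transpose_mat (col_mat (f \<tau>)))"
  define Fs where "Fs = mat_inv Gm"
  define \<theta> where "\<theta> = vec_integral K w (d * n) (\<lambda>\<tau>. kron (col_mat (f \<tau>)) (1\<^sub>m n) *\<^sub>v x \<tau>)"
  define Ui where "Ui = mat_inv U"
  define Wf where "Wf = (\<lambda>Y. mat_integral K w (\<rho> * n) (\<rho> * n)
                (\<lambda>\<tau>. kron (transpose_mat (col_mat (f \<tau>))) (1\<^sub>m (\<rho> * n)) * Y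
                       * kron (col_mat (f \<tau>)) (1\<^sub>m (\<rho> * n))))"
  define LHS where "LHS = (\<lambda>X Y. scalar_prod z
                ((transpose_mat \<Upsilon> * col_stack d n (\<rho> * n) X
                  + transpose_mat (col_stack d n (\<rho> * n) X) * \<Upsilon> - Wf Y) *\<^sub>v z))"
  define RHS where "RHS = scalar_prod \<theta> (kron Fs U *\<^sub>v \<theta>)"
  have Gpd: "pd_mat d Gm" using Finv_pd unfolding Gm_def .
  have Gc: "Gm \<in> carrier_mat d d" using Gpd unfolding pd_mat_def by auto
  have GFs: "Gm * Fs = 1\<^sub>m d" "Fs * Gm = 1\<^sub>m d" "Fs \<in> carrier_mat d d" "transpose_mat Fs = Fs"
    using pd_inv[OF Gpd] unfolding Fs_def by auto
  have Uc: "U \<in> carrier_mat n n" using U_pd unfolding pd_mat_def by auto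
  have UUi: "U * Ui = 1\<^sub>m n" "Ui \<in> carrier_mat n n" "transpose_mat Ui = Ui"
    using pd_inv[OF U_pd] unfolding Ui_def by auto
  have Usym: "transpose_mat U = U" using U_pd unfolding pd_mat_def sym_mat_def by auto
  have Gsym0: "transpose_mat Gm = Gm" using Gpd unfolding pd_mat_def sym_mat_def by auto
  have Gent: "Gm $$ (i, l) = (LINT t:K|lebesgue. w t * (f t $ i * f t $ l))" if "i < d" "l < d" for i l
    unfolding Gm_def using L.G_ent[OF that] .
  have thc: "\<theta> \<in> carrier_vec (d * n)" by (simp add: \<theta>_def vec_integral_def)
  have thent: "\<theta> $ (i*n+j) = (LINT t:K|lebesgue. w t * (f t $ i * x t $ j))" if "i < d" "j < n" for i j
    unfolding \<theta>_def using L.th_ent[OF that] .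
  have GF: "(\<Sum>l<d. Gm $$ (i, l) * Fs $$ (l, r)) = (if i = r then 1 else 0)" if "i < d" "r < d" for i r
    using inv_sum[OF Gc GFs(3) GFs(1) that] .
  have Fsym: "Fs $$ (i, l) = Fs $$ (l, i)" if "i < d" "l < d" for i l
    using GFs(3,4) that by (metis carrier_matD index_transpose_mat)
  have Gsym: "Gm $$ (i, l) = Gm $$ (l, i)" if "i < d" "l < d" for i l
    using Gc Gsym0 that by (metis carrier_matD index_transpose_mat)
  have Us: "U $$ (i, l) = U $$ (l, i)" if "i < n" "l < n" for i l
    using Uc Usym that by (metis carrier_matD index_transpose_mat)
  have UUis: "(\<Sum>a<n. U $$ (k, a) * Ui $$ (a, b)) = (if k = b then 1 else 0)" if "k < n" "b < n" for k b
    using inv_sum[OF Uc UUi(2) UUi(1) that] .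
  have Ups_th: "\<Upsilon> *\<^sub>v z = \<theta>" using Ups_z unfolding \<theta>_def .
  have zc: "z \<in> carrier_vec m" using z_dim by (simp add: m_def)
  have Upsc: "\<Upsilon> \<in> carrier_mat (d * n) m" using Ups_dim by (simp add: m_def)
  have Kc: "kron Fs U \<in> carrier_mat (d*n) (d*n)" using GFs(3) Uc by (auto simp: kron_dims)
  define S where "S i j = (\<Sum>r<d. Fs $$ (i, r) * \<theta> $ (r*n+j))" for i j
  have RHS_eq: "RHS = (\<Sum>a<d. \<Sum>j<n. \<Sum>b<d. \<Sum>k<n. \<theta> $ (a*n+j) * Fs $$ (a, b) * U $$ (j, k) * \<theta> $ (b*n+k))"
  proof -
    have "RHS = (\<Sum>A<d*n. \<Sum>B<d*n. \<theta> $ A * kron Fs U $$ (A, B) * \<theta> $ B)"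
      unfolding RHS_def by (rule qf_sum[OF Kc thc thc])
    also have "\<dots> = (\<Sum>a<d. \<Sum>j<n. \<Sum>b<d. \<Sum>k<n. \<theta> $ (a*n+j) * kron Fs U $$ (a*n+j, b*n+k) * \<theta> $ (b*n+k))"
      by (simp add: sum_mult_idx)
    also have "\<dots> = (\<Sum>a<d. \<Sum>j<n. \<Sum>b<d. \<Sum>k<n. \<theta> $ (a*n+j) * Fs $$ (a, b) * U $$ (j, k) * \<theta> $ (b*n+k))"
      by (intro sum.cong refl) (simp add: kron_entry2[OF GFs(3) Uc] mult_ac)
    finally show ?thesis .
  qed
  have LHS_eq: "LHS X Y = 2 * (\<Sum>i<d. \<Sum>j<n. \<theta> $ (i*n+j) * (\<Sum>p<m. X $$ (j, i*m+p) * z $ p))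
      - (\<Sum>i<d. \<Sum>l<d. Gm $$ (i, l) * (\<Sum>p<m. \<Sum>q<m. z $ p * Y $$ (i*m+p, l*m+q) * z $ q))"
    if X: "X \<in> carrier_mat n (d * m)" and Y: "Y \<in> carrier_mat (d * m) (d * m)" for X Y
  proof -
    define Xh where "Xh = col_stack d n m X"
    have Xhc: "Xh \<in> carrier_mat (d*n) m" by (simp add: Xh_def col_stack_def)
    have Xh_ent: "Xh $$ (i*n+j, q) = X $$ (j, i*m+q)" if "i < d" "j < n" "q < m" for i j q
      using that idx_lt[of i d j n] by (simp add: Xh_def col_stack_def)
    have Wc: "Wf Y \<in> carrier_mat m m" by (simp add: Wf_def mat_integral_def m_def)
    define v where "v = Xh *\<^sub>v z"
    have vc: "v \<in> carrier_vec (d*n)" using Xhc zc by (simp add: v_def)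
    have A1c: "transpose_mat \<Upsilon> * Xh \<in> carrier_mat m m" using Upsc Xhc by auto
    have A2c: "transpose_mat Xh * \<Upsilon> \<in> carrier_mat m m" using Upsc Xhc by auto
    have s1: "LHS X Y = z \<bullet> ((transpose_mat \<Upsilon> * Xh) *\<^sub>v z) + z \<bullet> ((transpose_mat Xh * \<Upsilon>) *\<^sub>v z) - z \<bullet> (Wf Y *\<^sub>v z)"
    proof -
      have "(transpose_mat \<Upsilon> * Xh + transpose_mat Xh * \<Upsilon> - Wf Y) *\<^sub>v z
          = (transpose_mat \<Upsilon> * Xh) *\<^sub>v z + (transpose_mat Xh * \<Upsilon>) *\<^sub>v z - Wf Y *\<^sub>v z"
        using A1c A2c Wc zc by (simp add: minus_mult_distrib_mat_vec[of _ m m] add_mult_distrib_mat_vec[of _ m m])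
      moreover have "LHS X Y = z \<bullet> ((transpose_mat \<Upsilon> * Xh + transpose_mat Xh * \<Upsilon> - Wf Y) *\<^sub>v z)"
        unfolding LHS_def Xh_def m_def by simp
      moreover have ac: "(transpose_mat \<Upsilon> * Xh) *\<^sub>v z \<in> carrier_vec m" using A1c zc by auto
      moreover have bc: "(transpose_mat Xh * \<Upsilon>) *\<^sub>v z \<in> carrier_vec m" using A2c zc by auto
      moreover have cc: "Wf Y *\<^sub>v z \<in> carrier_vec m" using Wc zc by auto
      ultimately show ?thesis
        using scalar_prod_minus_distrib[OF zc add_carrier_vec[OF ac bc] cc] scalar_prod_add_distrib[OF zc ac bc]
        by simp
    qed
    have s2: "z \<bullet> ((transpose_mat \<Upsilon> * Xh) *\<^sub>v z) = \<theta> \<bullet> v"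
    proof -
      have "z \<bullet> ((transpose_mat \<Upsilon> * Xh) *\<^sub>v z) = z \<bullet> (transpose_mat \<Upsilon> *\<^sub>v v)"
        using Upsc Xhc zc by (simp add: v_def)
      also have "\<dots> = (transpose_mat \<Upsilon> *\<^sub>v v) \<bullet> z" using Upsc vc zc by (intro comm_scalar_prod[of _ m]) auto
      also have "\<dots> = v \<bullet> (\<Upsilon> *\<^sub>v z)" by (rule transpose_vec_mult_scalar[OF Upsc zc vc])
      also have "\<dots> = \<theta> \<bullet> v" using Ups_th vc thc by (simp add: comm_scalar_prod[of _ "d*n"])
      finally show ?thesis .
    qed
    have s3: "z \<bullet> ((transpose_mat Xh * \<Upsilon>) *\<^sub>v z) = \<theta> \<bullet> v"
    proof -
      have "z \<bullet> ((transpose_mat Xh * \<Upsilon>) *\<^sub>v z) = z \<bullet> (transpose_mat Xh *\<^sub>v \<theta>)"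
        using Upsc Xhc zc Ups_th by simp
      also have "\<dots> = (transpose_mat Xh *\<^sub>v \<theta>) \<bullet> z" using Xhc thc zc by (intro comm_scalar_prod[of _ m]) auto
      also have "\<dots> = \<theta> \<bullet> (Xh *\<^sub>v z)" by (rule transpose_vec_mult_scalar[OF Xhc zc thc])
      finally show ?thesis unfolding v_def .
    qed
    have s4: "\<theta> \<bullet> v = (\<Sum>i<d. \<Sum>j<n. \<theta> $ (i*n+j) * (\<Sum>p<m. X $$ (j, i*m+p) * z $ p))"
    proof -
      have "\<theta> \<bullet> v = (\<Sum>k<d*n. \<theta> $ k * v $ k)" using vc by (simp add: scalar_prod_def atLeast0LessThan)
      also have "\<dots> = (\<Sum>i<d. \<Sum>j<n. \<theta> $ (i*n+j) * v $ (i*n+j))" by (rule sum_mult_idx)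
      also have "\<dots> = (\<Sum>i<d. \<Sum>j<n. \<theta> $ (i*n+j) * (\<Sum>p<m. X $$ (j, i*m+p) * z $ p))"
      proof (intro sum.cong refl)
        fix i j assume ij: "i \<in> {..<d}" "j \<in> {..<n}"
        have "v $ (i*n+j) = (\<Sum>q<m. Xh $$ (i*n+j, q) * z $ q)"
          unfolding v_def using Xhc zc ij idx_lt[of i d j n] by (subst mv_entry) auto
        also have "\<dots> = (\<Sum>p<m. X $$ (j, i*m+p) * z $ p)" using ij by (intro sum.cong refl) (simp add: Xh_ent)
        finally show "\<theta> $ (i*n+j) * v $ (i*n+j) = \<theta> $ (i*n+j) * (\<Sum>p<m. X $$ (j, i*m+p) * z $ p)" by simp
      qed
      finally show ?thesis .
    qed
    have s5: "z \<bullet> (Wf Y *\<^sub>v z) = (\<Sum>i<d. \<Sum>l<d. Gm $$ (i, l) * (\<Sum>p<m. \<Sum>q<m. z $ p * Y $$ (i*m+p, l*m+q) * z $ q))"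
    proof -
      have "z \<bullet> (Wf Y *\<^sub>v z) = (\<Sum>p<m. \<Sum>q<m. z $ p * Wf Y $$ (p, q) * z $ q)" by (rule qf_sum[OF Wc zc zc])
      also have "\<dots> = (\<Sum>p<m. \<Sum>q<m. \<Sum>i<d. \<Sum>l<d. Gm $$ (i, l) * (z $ p * Y $$ (i*m+p, l*m+q) * z $ q))"
      proof (intro sum.cong refl)
        fix p q assume pq: "p \<in> {..<m}" "q \<in> {..<m}"
        have "Wf Y $$ (p, q) = (\<Sum>i<d. \<Sum>l<d. (LINT t:K|lebesgue. w t * (f t $ i * f t $ l)) * Y $$ (i*m+p, l*m+q))"
          unfolding Wf_def m_def[symmetric] using L.W_ent[OF Y] pq by simp
        also have "\<dots> = (\<Sum>i<d. \<Sum>l<d. Gm $$ (i, l) * Y $$ (i*m+p, l*m+q))"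
          by (intro sum.cong refl) (simp add: Gent)
        finally show "z $ p * Wf Y $$ (p, q) * z $ q = (\<Sum>i<d. \<Sum>l<d. Gm $$ (i, l) * (z $ p * Y $$ (i*m+p, l*m+q) * z $ q))"
          by (simp add: sum_distrib_left sum_distrib_right mult_ac)
      qed
      also have "\<dots> = (\<Sum>i<d. \<Sum>l<d. \<Sum>p<m. \<Sum>q<m. Gm $$ (i, l) * (z $ p * Y $$ (i*m+p, l*m+q) * z $ q))"
        by (rule sum4_reorder)
      also have "\<dots> = (\<Sum>i<d. \<Sum>l<d. Gm $$ (i, l) * (\<Sum>p<m. \<Sum>q<m. z $ p * Y $$ (i*m+p, l*m+q) * z $ q))"
        by (simp add: sum_distrib_left)
      finally show ?thesis .
    qed
    show ?thesis using s1 s2 s3 s4 s5 by simp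
  qed
  have eqD: "\<rho> * d * n = d * m" by (simp add: m_def)
  have claim1: "LHS X Y \<le> RHS"
    if X: "X \<in> carrier_mat n (\<rho> * d * n)" and Y: "Y \<in> carrier_mat (\<rho> * d * n) (\<rho> * d * n)"
      and psd: "psd_mat (n + \<rho> * d * n) (four_block_mat U (- X) (- transpose_mat X) Y)" for X Y
  proof -
    have X': "X \<in> carrier_mat n (d * m)" and Y': "Y \<in> carrier_mat (d * m) (d * m)"
      and psd': "psd_mat (n + d * m) (four_block_mat U (- X) (- transpose_mat X) Y)"
      using X Y psd unfolding eqD by auto
    define V where "V i j = (\<Sum>p<m. X $$ (j, i*m+p) * z $ p)" for i j
    define M where "M i l = (\<Sum>p<m. \<Sum>q<m. z $ p * Y $$ (i*m+p, l*m+q) * z $ q)" for i l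
    define E where "E i l = M i l - 2 * (\<Sum>j<n. S l j * V i j) + (\<Sum>j<n. \<Sum>k<n. U $$ (j, k) * S i j * S l k)" for i l
    have pw: "\<forall>t\<in>K. 0 \<le> (\<Sum>i<d. \<Sum>l<d. f t $ i * f t $ l * E i l)"
      unfolding E_def M_def V_def using pt1[OF Uc X' Y' psd' L.f_car zc, of _ S] by blast
    have h0: "0 \<le> (\<Sum>i<d. \<Sum>l<d. (LINT t:K|lebesgue. w t * (f t $ i * f t $ l)) * E i l)"
      by (rule L.intP[OF pw])
    have h1: "(\<Sum>i<d. \<Sum>l<d. (LINT t:K|lebesgue. w t * (f t $ i * f t $ l)) * E i l) = (\<Sum>i<d. \<Sum>l<d. Gm $$ (i, l) * E i l)"
      by (intro sum.cong refl) (simp add: Gent)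
    have h2: "0 \<le> (\<Sum>i<d. \<Sum>l<d. Gm $$ (i, l) * E i l)" using h0 unfolding h1 .
    have "2 * (\<Sum>i<d. \<Sum>j<n. \<theta> $ (i*n+j) * V i j) - (\<Sum>i<d. \<Sum>l<d. Gm $$ (i, l) * M i l)
      \<le> (\<Sum>a<d. \<Sum>j<n. \<Sum>b<d. \<Sum>k<n. \<theta> $ (a*n+j) * Fs $$ (a, b) * U $$ (j, k) * \<theta> $ (b*n+k))"
      apply (rule core1[where G = "\<lambda>i l. Gm $$ (i, l)" and Fs = "\<lambda>i l. Fs $$ (i, l)" and th = "\<lambda>k. \<theta> $ k"
            and U = "\<lambda>j k. U $$ (j, k)" and S = S and M = M and V = V])
      apply (simp add: GF)
      apply (simp add: Fsym)
      apply (simp add: S_def)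
      apply (rule h2[unfolded E_def])
      done
    then show ?thesis unfolding LHS_eq[OF X' Y'] RHS_eq V_def M_def .
  qed
  have claim4: "RHS \<le> (LINT \<tau>:K|lebesgue. w \<tau> * scalar_prod (x \<tau>) (U *\<^sub>v x \<tau>))"
  proof -
    have pw: "\<forall>t\<in>K. 0 \<le> (\<Sum>j<n. \<Sum>k<n. U $$ (j, k) * ((x t $ j - (\<Sum>i<d. f t $ i * S i j)) * (x t $ k - (\<Sum>l<d. f t $ l * S l k))))"
    proof
      fix t
      define c where "c = vec n (\<lambda>j. x t $ j - (\<Sum>i<d. f t $ i * S i j))"
      have cc: "c \<in> carrier_vec n" by (simp add: c_def)
      have "0 \<le> c \<bullet> (U *\<^sub>v c)" by (rule pd_psd[OF U_pd cc])
      also have "\<dots> = (\<Sum>j<n. \<Sum>k<n. c $ j * U $$ (j, k) * c $ k)" by (rule qf_sum[OF Uc cc cc])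
      also have "\<dots> = (\<Sum>j<n. \<Sum>k<n. U $$ (j, k) * ((x t $ j - (\<Sum>i<d. f t $ i * S i j)) * (x t $ k - (\<Sum>l<d. f t $ l * S l k))))"
        by (intro sum.cong refl) (simp add: c_def)
      finally show "0 \<le> (\<Sum>j<n. \<Sum>k<n. U $$ (j, k) * ((x t $ j - (\<Sum>i<d. f t $ i * S i j)) * (x t $ k - (\<Sum>l<d. f t $ l * S l k))))" .
    qed
    define I where "I = (LINT t:K|lebesgue. w t * (\<Sum>j<n. \<Sum>k<n. U $$ (j, k) * (x t $ j * x t $ k)))"
    have Q: "0 \<le> I - (\<Sum>j<n. \<Sum>k<n. \<Sum>l<d. U $$ (j, k) * S l k * (LINT t:K|lebesgue. w t * (f t $ l * x t $ j)))
      - (\<Sum>j<n. \<Sum>k<n. \<Sum>i<d. U $$ (j, k) * S i j * (LINT t:K|lebesgue. w t * (f t $ i * x t $ k)))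
      + (\<Sum>j<n. \<Sum>k<n. \<Sum>i<d. \<Sum>l<d. U $$ (j, k) * S i j * S l k * (LINT t:K|lebesgue. w t * (f t $ i * f t $ l)))"
      unfolding I_def by (rule L.intQ[OF pw])
    have q2: "(\<Sum>j<n. \<Sum>k<n. \<Sum>l<d. U $$ (j, k) * S l k * (LINT t:K|lebesgue. w t * (f t $ l * x t $ j)))
        = (\<Sum>j<n. \<Sum>k<n. \<Sum>l<d. U $$ (j, k) * S l k * \<theta> $ (l*n+j))"
      by (intro sum.cong refl) (simp add: thent)
    have q3: "(\<Sum>j<n. \<Sum>k<n. \<Sum>i<d. U $$ (j, k) * S i j * (LINT t:K|lebesgue. w t * (f t $ i * x t $ k)))
        = (\<Sum>j<n. \<Sum>k<n. \<Sum>i<d. U $$ (j, k) * S i j * \<theta> $ (i*n+k))"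
      by (intro sum.cong refl) (simp add: thent)
    have q4: "(\<Sum>j<n. \<Sum>k<n. \<Sum>i<d. \<Sum>l<d. U $$ (j, k) * S i j * S l k * (LINT t:K|lebesgue. w t * (f t $ i * f t $ l)))
        = (\<Sum>j<n. \<Sum>k<n. \<Sum>i<d. \<Sum>l<d. U $$ (j, k) * S i j * S l k * Gm $$ (i, l))"
      by (intro sum.cong refl) (simp add: Gent)
    have "(\<Sum>a<d. \<Sum>j<n. \<Sum>b<d. \<Sum>k<n. \<theta> $ (a*n+j) * Fs $$ (a, b) * U $$ (j, k) * \<theta> $ (b*n+k)) \<le> I"
      apply (rule core4[where G = "\<lambda>i l. Gm $$ (i, l)" and Fs = "\<lambda>i l. Fs $$ (i, l)" and th = "\<lambda>k. \<theta> $ k"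
            and U = "\<lambda>j k. U $$ (j, k)" and S = S])
      apply (simp add: GF)
      apply (simp add: Fsym)
      apply (simp add: S_def)
      apply (rule Q[unfolded q2 q3 q4])
      done
    also have "I = (LINT \<tau>:K|lebesgue. w \<tau> * scalar_prod (x \<tau>) (U *\<^sub>v x \<tau>))"
      unfolding I_def by (simp add: qf_sum[OF Uc L.x_car L.x_car] mult_ac)
    finally show ?thesis unfolding RHS_eq .
  qed
  have claim2: "sym_mat (transpose_mat X * mat_inv U * X) \<and>
      psd_mat (n + \<rho> * d * n) (four_block_mat U (- X) (- transpose_mat X) (transpose_mat X * mat_inv U * X)) \<and>
      LHS X (transpose_mat X * mat_inv U * X) = RHS"
    if X: "X \<in> carrier_mat n (\<rho> * d * n)" and Xh: "col_stack d n (\<rho> * n) X = kron Fs U * \<Upsilon>" for X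
  proof (intro conjI)
    define Y where "Y = transpose_mat X * Ui * X"
    have X': "X \<in> carrier_mat n (d * m)" using X unfolding eqD .
    have Yc: "Y \<in> carrier_mat (d * m) (d * m)" using X' UUi(2) by (simp add: Y_def)
    show "sym_mat (transpose_mat X * mat_inv U * X)"
      unfolding sym_mat_def Ui_def[symmetric] by (rule XUX_sym[OF UUi(2) X UUi(3)])
    show "psd_mat (n + \<rho> * d * n) (four_block_mat U (- X) (- transpose_mat X) (transpose_mat X * mat_inv U * X))"
      unfolding Ui_def[symmetric] by (rule blk2[OF Uc UUi(2) UUi(1) U_pd UUi(3) X])
    define V where "V i j = (\<Sum>p<m. X $$ (j, i*m+p) * z $ p)" for i j
    define M2 where "M2 i l = (\<Sum>a<n. \<Sum>b<n. V i a * Ui $$ (a, b) * V l b)" for i l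
    have Vform: "V i j = (\<Sum>r<d. \<Sum>k<n. Fs $$ (i, r) * U $$ (j, k) * \<theta> $ (r*n+k))" if ij: "i < d" "j < n" for i j
    proof -
      define Xh where "Xh = col_stack d n m X"
      have Xhc: "Xh \<in> carrier_mat (d*n) m" by (simp add: Xh_def col_stack_def)
      have Xh_ent: "Xh $$ (i*n+j, q) = X $$ (j, i*m+q)" if "q < m" for q
        using that ij idx_lt[of i d j n] by (simp add: Xh_def col_stack_def)
      have "V i j = (\<Sum>q<m. Xh $$ (i*n+j, q) * z $ q)" unfolding V_def by (intro sum.cong refl) (simp add: Xh_ent)
      also have "\<dots> = (Xh *\<^sub>v z) $ (i*n+j)"
        using Xhc zc ij idx_lt[of i d j n] by (subst mv_entry) auto
      also have "Xh *\<^sub>v z = kron Fs U *\<^sub>v \<theta>"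
        using Xh Kc Upsc zc unfolding Xh_def m_def by (simp add: Ups_th[symmetric])
      also have "(kron Fs U *\<^sub>v \<theta>) $ (i*n+j) = (\<Sum>B<d*n. kron Fs U $$ (i*n+j, B) * \<theta> $ B)"
        using Kc thc ij idx_lt[of i d j n] by (subst mv_entry) auto
      also have "\<dots> = (\<Sum>r<d. \<Sum>k<n. kron Fs U $$ (i*n+j, r*n+k) * \<theta> $ (r*n+k))" by (rule sum_mult_idx)
      also have "\<dots> = (\<Sum>r<d. \<Sum>k<n. Fs $$ (i, r) * U $$ (j, k) * \<theta> $ (r*n+k))"
        using ij by (intro sum.cong refl) (simp add: kron_entry2[OF GFs(3) Uc])
      finally show ?thesis .
    qed
    have GM: "(\<Sum>i<d. \<Sum>l<d. Gm $$ (i, l) * (\<Sum>p<m. \<Sum>q<m. z $ p * Y $$ (i*m+p, l*m+q) * z $ q)) = (\<Sum>i<d. \<Sum>l<d. Gm $$ (i, l) * M2 i l)"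
    proof (intro sum.cong refl)
      fix i l assume il: "i \<in> {..<d}" "l \<in> {..<d}"
      have "(\<Sum>p<m. \<Sum>q<m. z $ p * Y $$ (i*m+p, l*m+q) * z $ q)
          = (\<Sum>p<m. \<Sum>q<m. \<Sum>a<n. \<Sum>b<n. (X $$ (a, i*m+p) * z $ p) * Ui $$ (a, b) * (X $$ (b, l*m+q) * z $ q))"
      proof (intro sum.cong refl)
        fix p q assume pq: "p \<in> {..<m}" "q \<in> {..<m}"
        have "Y $$ (i*m+p, l*m+q) = (\<Sum>a<n. \<Sum>b<n. X $$ (a, i*m+p) * Ui $$ (a, b) * X $$ (b, l*m+q))"
          unfolding Y_def using il pq idx_lt[of i d p m] idx_lt[of l d q m] by (intro XUX_entry[OF UUi(2) X']) auto
        then show "z $ p * Y $$ (i*m+p, l*m+q) * z $ q = (\<Sum>a<n. \<Sum>b<n. (X $$ (a, i*m+p) * z $ p) * Ui $$ (a, b) * (X $$ (b, l*m+q) * z $ q))"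
          by (simp add: sum_distrib_left sum_distrib_right mult_ac)
      qed
      also have "\<dots> = (\<Sum>a<n. \<Sum>b<n. \<Sum>p<m. \<Sum>q<m. (X $$ (a, i*m+p) * z $ p) * Ui $$ (a, b) * (X $$ (b, l*m+q) * z $ q))"
        by (rule sum4_reorder)
      also have "\<dots> = M2 i l" unfolding M2_def V_def
        by (intro sum.cong refl) (simp add: sum_distrib_left sum_distrib_right mult_ac)
      finally show "Gm $$ (i, l) * (\<Sum>p<m. \<Sum>q<m. z $ p * Y $$ (i*m+p, l*m+q) * z $ q) = Gm $$ (i, l) * M2 i l" by simp
    qed
    have "2 * (\<Sum>i<d. \<Sum>j<n. \<theta> $ (i*n+j) * V i j) - (\<Sum>i<d. \<Sum>l<d. Gm $$ (i, l) * M2 i l)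
      = (\<Sum>a<d. \<Sum>j<n. \<Sum>b<d. \<Sum>k<n. \<theta> $ (a*n+j) * Fs $$ (a, b) * U $$ (j, k) * \<theta> $ (b*n+k))"
      apply (rule core2[where G = "\<lambda>i l. Gm $$ (i, l)" and Fs = "\<lambda>i l. Fs $$ (i, l)" and th = "\<lambda>k. \<theta> $ k"
            and U = "\<lambda>j k. U $$ (j, k)" and Ui = "\<lambda>j k. Ui $$ (j, k)" and M = M2 and V = V])
      apply (simp add: GF)
      apply (simp add: Gsym)
      apply (simp add: Us)
      apply (simp add: UUis)
      apply (simp add: Vform)
      apply (simp add: M2_def)
      done
    then show "LHS X (transpose_mat X * mat_inv U * X) = RHS"
      unfolding Ui_def[symmetric] Y_def[symmetric] LHS_eq[OF X' Yc] RHS_eq GM V_def[symmetric] .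
  qed
  have claim3: "\<exists>X. X \<in> carrier_mat n (\<rho> * d * n) \<and> col_stack d n (\<rho> * n) X = kron Fs U * \<Upsilon>"
  proof -
    define B where "B = kron Fs U * \<Upsilon>"
    define X0 where "X0 = mat n (\<rho> * d * n) (\<lambda>(j, c). B $$ ((c div m) * n + j, c mod m))"
    have Bc: "B \<in> carrier_mat (d*n) m" using Kc Upsc by (simp add: B_def)
    have "col_stack d n (\<rho> * n) X0 = B"
    proof (rule eq_matI)
      show "dim_row (col_stack d n (\<rho> * n) X0) = dim_row B" "dim_col (col_stack d n (\<rho> * n) X0) = dim_col B"
        using Bc by (auto simp: col_stack_def m_def)
      fix r c assume r: "r < dim_row B" and c: "c < dim_col B"
      have r': "r < d * n" and c': "c < m" using r c Bc by auto
      have n0: "0 < n" using r' by (cases n) auto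
      have rd: "r div n < d" using r' by (simp add: less_mult_imp_div_less)
      have idx: "(r div n) * m + c < \<rho> * d * n" unfolding eqD by (rule idx_lt[OF rd c'])
      have "col_stack d n (\<rho> * n) X0 $$ (r, c) = X0 $$ (r mod n, (r div n) * m + c)"
        using r' c' by (simp add: col_stack_def m_def)
      also have "\<dots> = B $$ (((r div n) * m + c) div m * n + r mod n, ((r div n) * m + c) mod m)"
        using idx n0 by (simp add: X0_def)
      also have "\<dots> = B $$ (r, c)" using c' by simp
      finally show "col_stack d n (\<rho> * n) X0 $$ (r, c) = B $$ (r, c)" .
    qed
    moreover have "X0 \<in> carrier_mat n (\<rho> * d * n)" by (simp add: X0_def)
    ultimately show ?thesis unfolding B_def by blast
  qed
  have all: "(\<forall>X Y. X \<in> carrier_mat n (\<rho> * d * n) \<longrightarrow>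
               Y \<in> carrier_mat (\<rho> * d * n) (\<rho> * d * n) \<longrightarrow> sym_mat Y \<longrightarrow>
               psd_mat (n + \<rho> * d * n) (four_block_mat U (- X) (- transpose_mat X) Y) \<longrightarrow>
               LHS X Y \<le> RHS)
      \<and> (\<forall>X. X \<in> carrier_mat n (\<rho> * d * n) \<longrightarrow> col_stack d n (\<rho> * n) X = kron Fs U * \<Upsilon> \<longrightarrow>
               (let Y = transpose_mat X * mat_inv U * X in
                  sym_mat Y \<and>
                  psd_mat (n + \<rho> * d * n) (four_block_mat U (- X) (- transpose_mat X) Y) \<and>
                  LHS X Y = RHS))
      \<and> (\<exists>X. X \<in> carrier_mat n (\<rho> * d * n) \<and> col_stack d n (\<rho> * n) X = kron Fs U * \<Upsilon>)
      \<and> RHS \<le> (LINT \<tau>:K|lebesgue. w \<tau> * scalar_prod (x \<tau>) (U *\<^sub>v x \<tau>))"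
    using claim1 claim2 claim3 claim4 unfolding Let_def by blast
  show ?thesis using all unfolding Let_def LHS_def RHS_def Wf_def Fs_def Gm_def \<theta>_def .
qed


end
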